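(* Let $n\ge1$ and $\eta\in(0,1]$. Consider the correlations obtained in the routed Bell scenario with $n$ long-path inputs from the state $|\Phi^+\rangle=\frac{1}{\sqrt2}(|00\rangle+|11\rangle)$, Alice measuring the observables $A_0=Z$, $A_1=X$ (projectively), the short-path device measuring $B^{\mathrm S}_0=\frac{Z+X}{\sqrt2}$, $B^{\mathrm S}_1=\frac{Z-X}{\sqrt2}$ (projectively), and the long-path device measuring, for input $y$, the POVM $\mathrm B^{\mathrm L}_{b|y}=\frac{\eta}{2}\big(I+(-1)^b(\cos\theta_yZ+\sin\theta_yX)\big)$ for $b\in\{0,1\}$ and $\mathrm B^{\mathrm L}_{\varnothing|y}=(1-\eta)I$. These correlations have $\mathcal S=2\sqrt2$, $\mathcal T_n=\eta$, $\mathcal W_n=\eta$, and they are not SRQ whenever $\eta>1/n$.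
   Context: Routed Bell scenario with $n$ long-path inputs: Alice has input $x\in\{0,1\}$ and outcome $a\in\{0,1\}$; a route $r\in\{\mathrm S,\mathrm L\}$ is chosen; if $r=\mathrm S$ Bob has input $y\in\{0,1\}$ and outcome $b\in\{0,1\}$; if $r=\mathrm L$ Bob has input $y\in\{0,\dots,n-1\}$ and outcome $b\in\{0,1,\varnothing\}$. Set $\theta_y=y\pi/n$. A binary observable $O$ is measured via projectors $\frac12(I+(-1)^aO)$. Quantum correlations: $p(a,b|x,y,r)=\langle\Phi^+|\mathrm A_{a|x}\otimes\mathrm B^r_{b|y}|\Phi^+\rangle$. Correlations are short-range quantum (SRQ) if there exist finite-dimensional complex Hilbert spaces $H_A,H_B$, a density operator $\rho_{AB}$, POVMs $\{\mathrm A_{a|x}\}_{a}$ on $H_A$, POVMs $\{\mathrm B^{\mathrm S}_{b|y}\}_b$ on $H_B$, a POVM $\{\mathrm E_\lambda\}_{\lambda\in\Lambda}$ on $H_B$ with finite $\Lambda$, and conditional probabilities $p(b|y,\lambda)$, $b\in\{0,1,\varnothing\}$, such that $p(a,b|x,y,\mathrm S)=\mathrm{tr}(\rho_{AB}\mathrm A_{a|x}\otimes\mathrm B^{\mathrm S}_{b|y})$ and $p(a,b|x,y,\mathrm L)=\sum_\lambda p(b|y,\lambda)\mathrm{tr}(\rho_{AB}\mathrm A_{a|x}\otimes\mathrm E_\lambda)$. Correlators $\langle A_xB^r_y\rangle:=\sum_{a,b\in\{0,1\}}(-1)^{a+b}p(a,b|x,y,r)$; $\mathcal S:=\sum_{x,y\in\{0,1\}}(-1)^{xy}\langle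 A_xB^{\mathrm S}_y\rangle$; $\mathcal W_n:=\frac1n\sum_{y}\big(\cos\theta_y\langle A_0B^{\mathrm L}_y\rangle+\sin\theta_y\langle A_1B^{\mathrm L}_y\rangle\big)$; $\mathcal T_n:=\frac1n\sum_y\sum_{b\in\{0,1\}}p(b|y,\mathrm L)$ with $p(b|y,\mathrm L)=\sum_ap(a,b|x,y,\mathrm L)$. *)

theory Defs
  imports Complex_Main "Jordan_Normal_Form.Matrix"
begin

definition mtrace :: "complex mat \<Rightarrow> complex" where
  "mtrace M = (\<Sum>i<dim_row M. M $$ (i, i))"

definition kron :: "complex mat \<Rightarrow> complex mat \<Rightarrow> complex mat" where
  "kron A B = mat (dim_row A * dim_row B) (dim_col A * dim_col B)
     (\<lambda>(i, j). A $$ (i div dim_row B, j div dim_col B) * B $$ (i mod dim_row B, j mod dim_col B))"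

definition psd :: "nat \<Rightarrow> complex mat \<Rightarrow> bool" where
  "psd d M \<longleftrightarrow> M \<in> carrier_mat d d \<and>
     (\<forall>v \<in> carrier_vec d. Im ((M *\<^sub>v v) \<bullet>c v) = 0 \<and> Re ((M *\<^sub>v v) \<bullet>c v) \<ge> 0)"

definition density_op :: "nat \<Rightarrow> complex mat \<Rightarrow> bool" where
  "density_op d \<rho> \<longleftrightarrow> psd d \<rho> \<and> mtrace \<rho> = 1"

definition povm :: "nat \<Rightarrow> 'b set \<Rightarrow> ('b \<Rightarrow> complex mat) \<Rightarrow> bool" where
  "povm d Outs E \<longleftrightarrow> finite Outs \<and> (\<forall>b\<in>Outs. psd d (E b)) \<and>
     (\<forall>i<d. \<forall>j<d. (\<Sum>b\<in>Outs. E b $$ (i, j)) = (1\<^sub>m d) $$ (i, j))"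

text \<open>Outcomes/inputs are naturals; Alice: x,a in {0,1}; short path: y,b in {0,1};
 long path: y in {0..<n}, b in {Some 0, Some 1, None}, None being the no-click outcome.
 A correlation is a pair of functions pS a b x y and pL a b x y.\<close>

definition outL :: "nat option set" where
  "outL = {Some 0, Some 1, None}"

definition SRQ :: "nat \<Rightarrow> (nat \<Rightarrow> nat \<Rightarrow> nat \<Rightarrow> nat \<Rightarrow> real)
                 \<Rightarrow> (nat \<Rightarrow> nat option \<Rightarrow> nat \<Rightarrow> nat \<Rightarrow> real) \<Rightarrow> bool" where
  "SRQ n pS pL \<longleftrightarrow>
     (\<exists>(dA::nat) (dB::nat) \<rho> (A :: nat \<Rightarrow> nat \<Rightarrow> complex mat) (BS :: nat \<Rightarrow> nat \<Rightarrow> complex mat)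
        (E :: nat \<Rightarrow> complex mat) (\<Lambda> :: nat set) (pb :: nat option \<Rightarrow> nat \<Rightarrow> nat \<Rightarrow> real).
        density_op (dA * dB) \<rho> \<and>
        (\<forall>x<2. povm dA {0, 1} (A x)) \<and>
        (\<forall>y<2. povm dB {0, 1} (BS y)) \<and>
        finite \<Lambda> \<and> povm dB \<Lambda> E \<and>
        (\<forall>y<n. \<forall>l\<in>\<Lambda>. (\<forall>b\<in>outL. pb b y l \<ge> 0) \<and> (\<Sum>b\<in>outL. pb b y l) = 1) \<and>
        (\<forall>a<2. \<forall>b<2. \<forall>x<2. \<forall>y<2.
           complex_of_real (pS a b x y) = mtrace (\<rho> * kron (A x a) (BS y b))) \<and>
        (\<forall>a<2. \<forall>b\<in>outL. \<forall>x<2. \<forall>y<n.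
           complex_of_real (pL a b x y) =
             (\<Sum>l\<in>\<Lambda>. complex_of_real (pb b y l) * mtrace (\<rho> * kron (A x a) (E l)))))"

definition corrS :: "(nat \<Rightarrow> nat \<Rightarrow> nat \<Rightarrow> nat \<Rightarrow> real) \<Rightarrow> nat \<Rightarrow> nat \<Rightarrow> real" where
  "corrS pS x y = (\<Sum>a<2. \<Sum>b<2. (-1) ^ (a + b) * pS a b x y)"

definition corrL :: "(nat \<Rightarrow> nat option \<Rightarrow> nat \<Rightarrow> nat \<Rightarrow> real) \<Rightarrow> nat \<Rightarrow> nat \<Rightarrow> real" where
  "corrL pL x y = (\<Sum>a<2. \<Sum>b<2. (-1) ^ (a + b) * pL a (Some b) x y)"

definition CHSH :: "(nat \<Rightarrow> nat \<Rightarrow> nat \<Rightarrow> nat \<Rightarrow> real) \<Rightarrow> real" where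
  "CHSH pS = (\<Sum>x<2. \<Sum>y<2. (-1) ^ (x * y) * corrS pS x y)"

definition theta :: "nat \<Rightarrow> nat \<Rightarrow> real" where
  "theta n y = real y * pi / real n"

definition Wn :: "nat \<Rightarrow> (nat \<Rightarrow> nat option \<Rightarrow> nat \<Rightarrow> nat \<Rightarrow> real) \<Rightarrow> real" where
  "Wn n pL = (1 / real n) * (\<Sum>y<n. cos (theta n y) * corrL pL 0 y + sin (theta n y) * corrL pL 1 y)"

text \<open>Marginal p(b|y,L) = sum_a p(a,b|x,y,L), taken at Alice's input x = 0.\<close>
definition Tn :: "nat \<Rightarrow> (nat \<Rightarrow> nat option \<Rightarrow> nat \<Rightarrow> nat \<Rightarrow> real) \<Rightarrow> real" where
  "Tn n pL = (1 / real n) * (\<Sum>y<n. \<Sum>b<2. \<Sum>a<2. pL a (Some b) 0 y)"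

definition Zm :: "complex mat" where "Zm = mat_of_rows_list 2 [[1, 0], [0, -1]]"
definition Xm :: "complex mat" where "Xm = mat_of_rows_list 2 [[0, 1], [1, 0]]"

definition proj :: "complex mat \<Rightarrow> nat \<Rightarrow> complex mat" where
  "proj Obs a = (1 / 2 :: complex) \<cdot>\<^sub>m (1\<^sub>m 2 + ((-1) ^ a :: complex) \<cdot>\<^sub>m Obs)"

definition phi_plus :: "complex vec" where
  "phi_plus = vec_of_list [1 / sqrt 2, 0, 0, 1 / sqrt 2]"

definition expect :: "complex mat \<Rightarrow> complex" where
  "expect M = (M *\<^sub>v phi_plus) \<bullet>c phi_plus"

definition Aq :: "nat \<Rightarrow> nat \<Rightarrow> complex mat" where
  "Aq x a = proj (if x = 0 then Zm else Xm) a"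

definition BSq :: "nat \<Rightarrow> nat \<Rightarrow> complex mat" where
  "BSq y b = proj (if y = 0 then (1 / complex_of_real (sqrt 2)) \<cdot>\<^sub>m (Zm + Xm)
                   else (1 / complex_of_real (sqrt 2)) \<cdot>\<^sub>m (Zm - Xm)) b"

definition BLq :: "real \<Rightarrow> nat \<Rightarrow> nat \<Rightarrow> nat option \<Rightarrow> complex mat" where
  "BLq \<eta> n y b = (case b of
      Some c \<Rightarrow> complex_of_real (\<eta> / 2) \<cdot>\<^sub>m (1\<^sub>m 2 + ((-1) ^ c :: complex) \<cdot>\<^sub>m
                 (complex_of_real (cos (theta n y)) \<cdot>\<^sub>m Zm + complex_of_real (sin (theta n y)) \<cdot>\<^sub>m Xm))
    | None \<Rightarrow> complex_of_real (1 - \<eta>) \<cdot>\<^sub>m 1\<^sub>m 2)"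

definition pQS :: "nat \<Rightarrow> nat \<Rightarrow> nat \<Rightarrow> nat \<Rightarrow> real" where
  "pQS a b x y = Re (expect (kron (Aq x a) (BSq y b)))"

definition pQL :: "real \<Rightarrow> nat \<Rightarrow> nat \<Rightarrow> nat option \<Rightarrow> nat \<Rightarrow> nat \<Rightarrow> real" where
  "pQL \<eta> n a b x y = Re (expect (kron (Aq x a) (BLq \<eta> n y b)))"

end

theory Submission
  imports Defs
begin

lemma s2c: "complex_of_real (sqrt 2) * complex_of_real (sqrt 2) = 2"
  by (simp flip: of_real_mult)
lemma s2c': "complex_of_real (sqrt 2) * (complex_of_real (sqrt 2) * z) = 2 * z"
  by (simp add: s2c flip: mult.assoc)
lemma expect_kron:
  assumes "P \<in> carrier_mat 2 2" "Q \<in> carrier_mat 2 2"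
  shows "expect (kron P Q) = (P$$(0,0)*Q$$(0,0) + P$$(0,1)*Q$$(0,1) + P$$(1,0)*Q$$(1,0) + P$$(1,1)*Q$$(1,1))/2"
proof -
  have e: "{..<4::nat} = {0,1,2,3}" by auto
  show ?thesis using assms
  unfolding expect_def kron_def phi_plus_def
  by (simp add: scalar_prod_def e mult_mat_vec_def  power2_eq_square field_simps s2c s2c')
qed

lemma Zm_c: "Zm \<in> carrier_mat 2 2" and Xm_c: "Xm \<in> carrier_mat 2 2"
  by (auto simp: Zm_def Xm_def mat_of_rows_list_def)
lemma Zm_e: "Zm $$ (0,0) = 1" "Zm $$ (0,1) = 0" "Zm $$ (1,0) = 0" "Zm $$ (1,1) = -1"
  and Xm_e: "Xm $$ (0,0) = 0" "Xm $$ (0,1) = 1" "Xm $$ (1,0) = 1" "Xm $$ (1,1) = 0"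
  by (auto simp: Zm_def Xm_def mat_of_rows_list_def)
lemma proj_c: "Ob \<in> carrier_mat 2 2 \<Longrightarrow> proj Ob a \<in> carrier_mat 2 2"
  unfolding proj_def by auto
lemma proj_e: "Ob \<in> carrier_mat 2 2 \<Longrightarrow> i < 2 \<Longrightarrow> j < 2 \<Longrightarrow>
  proj Ob a $$ (i,j) = ((if i = j then 1 else 0) + (-1)^a * Ob $$ (i,j)) / 2"
  unfolding proj_def by auto
lemma sum2: "(\<Sum>a<(2::nat). f a) = f 0 + f 1"
  by (simp add: numeral_2_eq_2)
lemma corr_gen:
  assumes "P \<in> carrier_mat 2 2" "Q \<in> carrier_mat 2 2"
  shows "(\<Sum>a<2. \<Sum>b<2. (-1)^(a+b) * Re (expect (kron (proj P a) (proj Q b)))) =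
     Re ((P$$(0,0)*Q$$(0,0) + P$$(0,1)*Q$$(0,1) + P$$(1,0)*Q$$(1,0) + P$$(1,1)*Q$$(1,1))/2)"
  using assms by (simp add: sum2 expect_kron proj_c proj_e field_simps)
lemma marg_gen:
  assumes "P \<in> carrier_mat 2 2" "Q \<in> carrier_mat 2 2"
  shows "(\<Sum>b<2. \<Sum>a<2. Re (expect (kron (proj P a) (proj Q b)))) = 1"
  using assms by (simp add: sum2 expect_kron proj_c proj_e field_simps)

definition OA :: "nat \<Rightarrow> complex mat" where "OA x = (if x = 0 then Zm else Xm)"
definition OB :: "nat \<Rightarrow> complex mat" where "OB y = (if y = 0 then (1 / complex_of_real (sqrt 2)) \<cdot>\<^sub>m (Zm + Xm)
                   else (1 / complex_of_real (sqrt 2)) \<cdot>\<^sub>m (Zm - Xm))"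
definition NL :: "real \<Rightarrow> complex mat" where "NL t = complex_of_real (cos t) \<cdot>\<^sub>m Zm + complex_of_real (sin t) \<cdot>\<^sub>m Xm"
lemma OA_c: "OA x \<in> carrier_mat 2 2" and OB_c: "OB y \<in> carrier_mat 2 2" and NL_c: "NL t \<in> carrier_mat 2 2"
  using Zm_c Xm_c by (auto simp: OA_def OB_def NL_def)
lemma ZXdim[simp]: "dim_row Zm = 2" "dim_col Zm = 2" "dim_row Xm = 2" "dim_col Xm = 2"
  by (auto simp: Zm_def Xm_def mat_of_rows_list_def)
lemma OA_e: "OA 0 $$ (0,0) = 1" "OA 0 $$ (0,1) = 0" "OA 0 $$ (1,0) = 0" "OA 0 $$ (1,1) = -1"
  "OA 1 $$ (0,0) = 0" "OA 1 $$ (0,1) = 1" "OA 1 $$ (1,0) = 1" "OA 1 $$ (1,1) = 0"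
  by (auto simp: OA_def Zm_def Xm_def mat_of_rows_list_def)
lemma OB_e: "OB 0 $$ (0,0) = 1 / complex_of_real (sqrt 2)" "OB 0 $$ (0,1) = 1 / complex_of_real (sqrt 2)" "OB 0 $$ (1,0) = 1 / complex_of_real (sqrt 2)" "OB 0 $$ (1,1) = -1 / complex_of_real (sqrt 2)"
  "OB 1 $$ (0,0) = 1 / complex_of_real (sqrt 2)" "OB 1 $$ (0,1) = - 1 / complex_of_real (sqrt 2)" "OB 1 $$ (1,0) = -1 / complex_of_real (sqrt 2)" "OB 1 $$ (1,1) = -1 / complex_of_real (sqrt 2)"
  by (auto simp: OB_def Zm_def Xm_def mat_of_rows_list_def)
lemma NL_e: "NL t $$ (0,0) = cos t" "NL t $$ (0,1) = sin t" "NL t $$ (1,0) = sin t" "NL t $$ (1,1) = - cos t"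
  by (auto simp: NL_def Zm_def Xm_def mat_of_rows_list_def)
lemma Aq_eq: "Aq x a = proj (OA x) a" by (simp add: Aq_def OA_def)
lemma BSq_eq: "BSq y b = proj (OB y) b" by (simp add: BSq_def OB_def)
lemma BLq_eq: "BLq \<eta> n y (Some b) = complex_of_real \<eta> \<cdot>\<^sub>m proj (NL (theta n y)) b"
  unfolding BLq_def proj_def NL_def by (auto simp: smult_smult_assoc)

lemma corrS_val: "corrS pQS x y = Re ((OA x$$(0,0)*OB y$$(0,0) + OA x$$(0,1)*OB y$$(0,1) + OA x$$(1,0)*OB y$$(1,0) + OA x$$(1,1)*OB y$$(1,1))/2)"
  unfolding corrS_def pQS_def Aq_eq BSq_eq by (rule corr_gen[OF OA_c OB_c])

lemma expect_smult_right: "P \<in> carrier_mat 2 2 \<Longrightarrow> Q \<in> carrier_mat 2 2 \<Longrightarrow>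
   expect (kron P (c \<cdot>\<^sub>m Q)) = c * expect (kron P Q)"
  by (simp add: expect_kron field_simps)

lemma pQL_eq: "pQL \<eta> n a (Some b) x y = \<eta> * Re (expect (kron (proj (OA x) a) (proj (NL (theta n y)) b)))"
  unfolding pQL_def Aq_eq BLq_eq
  by (simp add: expect_smult_right proj_c OA_c NL_c)

lemma corrL_val: "corrL (pQL \<eta> n) x y = \<eta> * Re ((OA x$$(0,0)*NL (theta n y)$$(0,0) + OA x$$(0,1)*NL (theta n y)$$(0,1) + OA x$$(1,0)*NL (theta n y)$$(1,0) + OA x$$(1,1)*NL (theta n y)$$(1,1))/2)"
proof -
  have "corrL (pQL \<eta> n) x y = \<eta> * (\<Sum>a<2. \<Sum>b<2. (-1)^(a+b) * Re (expect (kron (proj (OA x) a) (proj (NL (theta n y)) b))))"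
    unfolding corrL_def pQL_eq by (simp add: sum_distrib_left field_simps)
  then show ?thesis by (simp add: corr_gen[OF OA_c NL_c])
qed

lemma part1: "CHSH pQS = 2 * sqrt 2"
proof -
  have "corrS pQS 0 0 = 1 / sqrt 2" "corrS pQS 0 1 = 1 / sqrt 2" "corrS pQS 1 0 = 1 / sqrt 2" "corrS pQS 1 1 = - 1 / sqrt 2"
    unfolding corrS_val OA_e OB_e by (simp_all add: field_simps)
  note h = this
  have q: "4 / sqrt 2 = 2 * sqrt (2::real)"
    by (simp add: field_simps)
  have "CHSH pQS = 1 / sqrt 2 + 1 / sqrt 2 + 1 / sqrt 2 + 1 / sqrt 2"
    unfolding CHSH_def sum2 h by simp
  also have "\<dots> = 4 / sqrt 2" by simp
  finally show ?thesis using q by simp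
qed

lemma part2: assumes "n \<ge> 1" shows "Tn n (pQL \<eta> n) = \<eta>"
proof -
  have "\<And>y. (\<Sum>b<2. \<Sum>a<2. pQL \<eta> n a (Some b) 0 y) = \<eta>"
    unfolding pQL_eq using marg_gen[OF OA_c NL_c]
    by (simp add: sum_distrib_left[symmetric])
  then show ?thesis unfolding Tn_def using assms by simp
qed

lemma part3: assumes "n \<ge> 1" shows "Wn n (pQL \<eta> n) = \<eta>"
proof -
  have "\<And>y. cos (theta n y) * corrL (pQL \<eta> n) 0 y + sin (theta n y) * corrL (pQL \<eta> n) 1 y = \<eta>"
  proof -
    fix y
    have "corrL (pQL \<eta> n) 0 y = \<eta> * cos (theta n y)" "corrL (pQL \<eta> n) 1 y = \<eta> * sin (theta n y)"
      unfolding corrL_val OA_e NL_e by simp_all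
    then show "cos (theta n y) * corrL (pQL \<eta> n) 0 y + sin (theta n y) * corrL (pQL \<eta> n) 1 y = \<eta>"
      by (simp add: algebra_simps flip: distrib_left power2_eq_square)
  qed
  then show ?thesis unfolding Wn_def using assms by simp
qed

definition ap :: "nat \<Rightarrow> complex mat \<Rightarrow> (nat \<Rightarrow> complex) \<Rightarrow> (nat \<Rightarrow> complex)" where
  "ap d X f = (\<lambda>i. if i < d then \<Sum>j<d. X$$(i,j) * f j else 0)"
definition ip :: "nat \<Rightarrow> (nat \<Rightarrow> complex) \<Rightarrow> (nat \<Rightarrow> complex) \<Rightarrow> complex" where
  "ip d f g = (\<Sum>i<d. f i * cnj (g i))"
definition qf :: "nat \<Rightarrow> complex mat \<Rightarrow> (nat \<Rightarrow> complex) \<Rightarrow> complex" where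
  "qf d X f = ip d (ap d X f) f"
definition hermf :: "nat \<Rightarrow> complex mat \<Rightarrow> bool" where
  "hermf d X \<longleftrightarrow> (\<forall>i<d. \<forall>j<d. X$$(j,i) = cnj (X$$(i,j)))"
definition ee :: "nat \<Rightarrow> nat \<Rightarrow> complex" where
  "ee i = (\<lambda>k. if k = i then 1 else 0)"

lemma ap_in: "i < d \<Longrightarrow> ap d X f i = (\<Sum>j<d. X$$(i,j) * f j)"
  unfolding ap_def by simp

lemma ip_apL: "ip d (ap d X f) g = (\<Sum>i<d. (\<Sum>j<d. X$$(i,j) * f j) * cnj (g i))"
  unfolding ip_def by (rule sum.cong[OF refl]) (simp add: ap_in)

lemma ip_apR: "ip d g (ap d X f) = (\<Sum>i<d. g i * cnj (\<Sum>j<d. X$$(i,j) * f j))"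
  unfolding ip_def by (rule sum.cong[OF refl]) (simp add: ap_in)

lemma qf_vec:
  assumes "M \<in> carrier_mat d d" "v \<in> carrier_vec d"
  shows "(M *\<^sub>v v) \<bullet>c v = qf d M (\<lambda>i. v $ i)"
  using assms unfolding qf_def ip_apL
  by (auto simp: mult_mat_vec_def scalar_prod_def intro!: sum.cong)

lemma psd_iff: "psd d M \<longleftrightarrow> M \<in> carrier_mat d d \<and> (\<forall>f. Im (qf d M f) = 0 \<and> 0 \<le> Re (qf d M f))"
proof
  assume a: "psd d M"
  then have c: "M \<in> carrier_mat d d" by (simp add: psd_def)
  show "M \<in> carrier_mat d d \<and> (\<forall>f. Im (qf d M f) = 0 \<and> 0 \<le> Re (qf d M f))"
  proof (intro conjI allI c)
    fix f :: "nat \<Rightarrow> complex"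
    have v: "vec d f \<in> carrier_vec d" by simp
    have "qf d M f = qf d M (\<lambda>i. vec d f $ i)"
      unfolding qf_def ip_apL by (auto intro!: sum.cong)
    then have "qf d M f = (M *\<^sub>v vec d f) \<bullet>c vec d f" using qf_vec[OF c v] by simp
    then show "Im (qf d M f) = 0" "0 \<le> Re (qf d M f)" using a v unfolding psd_def by auto
  qed
next
  assume "M \<in> carrier_mat d d \<and> (\<forall>f. Im (qf d M f) = 0 \<and> 0 \<le> Re (qf d M f))"
  then have c: "M \<in> carrier_mat d d" and q: "\<And>f. Im (qf d M f) = 0 \<and> 0 \<le> Re (qf d M f)" by auto
  show "psd d M" unfolding psd_def
  proof (intro conjI c ballI)
    fix v :: "complex vec" assume v: "v \<in> carrier_vec d"
    show "Im ((M *\<^sub>v v) \<bullet>c v) = 0" "Re ((M *\<^sub>v v) \<bullet>c v) \<ge> 0"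
      unfolding qf_vec[OF c v] using q by auto
  qed
qed

lemma ap_ee: "j < d \<Longrightarrow> ap d X (ee j) = (\<lambda>a. if a < d then X$$(a,j) else 0)"
  unfolding ap_def ee_def by (auto simp: if_distrib cong: if_cong)

lemma ip_ee: "i < d \<Longrightarrow> ip d h (ee i) = h i"
  unfolding ip_def ee_def by (auto simp: if_distrib cong: if_cong)

lemma qf_ee: "i < d \<Longrightarrow> qf d X (ee i) = X$$(i,i)"
  unfolding qf_def by (simp add: ap_ee ip_ee)

lemma ap_lin:
  "ap d X (\<lambda>k. x * g k + y * h k) = (\<lambda>a. x * ap d X g a + y * ap d X h a)"
  unfolding ap_def by (rule ext) (simp add: distrib_left sum.distrib sum_distrib_left mult.left_commute)

lemma ip_lin2:
  assumes "i < d" "j < d"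
  shows "ip d u (\<lambda>k. x * ee i k + y * ee j k) = u i * cnj x + u j * cnj y"
proof -
  have "ip d u (\<lambda>k. x * ee i k + y * ee j k) = cnj x * ip d u (ee i) + cnj y * ip d u (ee j)"
    unfolding ip_def by (simp add: distrib_left sum.distrib sum_distrib_left mult.left_commute)
  then show ?thesis using assms by (simp add: ip_ee)
qed

lemma qf_two:
  assumes "i < d" "j < d"
  shows "qf d X (\<lambda>k. x * ee i k + y * ee j k) =
     (X$$(i,i) * x + X$$(i,j) * y) * cnj x + (X$$(j,i) * x + X$$(j,j) * y) * cnj y"
  unfolding qf_def ap_lin ip_lin2[OF assms] using assms by (simp add: ap_ee algebra_simps)

lemma psd_herm:
  assumes "psd d M"
  shows "hermf d M"
  unfolding hermf_def
proof (intro allI impI)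
  fix i j assume ij: "i < d" "j < d"
  have P: "\<And>f. Im (qf d M f) = 0" using assms psd_iff by blast
  have di: "Im (M$$(i,i)) = 0" "Im (M$$(j,j)) = 0" using P[of "ee i"] P[of "ee j"] ij by (auto simp: qf_ee)
  show "M$$(j,i) = cnj (M$$(i,j))"
  proof (cases "i = j")
    case True then show ?thesis using di by (simp add: complex_eq_iff)
  next
    case False
    have e1: "qf d M (\<lambda>k. 1 * ee i k + 1 * ee j k) = M$$(i,i) + M$$(i,j) + M$$(j,i) + M$$(j,j)"
      using qf_two[OF ij, of M 1 1] by simp
    have 1: "Im (M$$(i,j) + M$$(j,i)) = 0"
      using P[of "\<lambda>k. 1 * ee i k + 1 * ee j k"] di unfolding e1 by simp
    have e2: "qf d M (\<lambda>k. 1 * ee i k + \<i> * ee j k) = M$$(i,i) + \<i> * M$$(i,j) - \<i> * M$$(j,i) + M$$(j,j)"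
      using qf_two[OF ij, of M 1 \<i>] by (simp add: algebra_simps)
    have 2: "Re (M$$(i,j)) - Re (M$$(j,i)) = 0"
      using P[of "\<lambda>k. 1 * ee i k + \<i> * ee j k"] di unfolding e2 by simp
    show ?thesis using 1 2 by (simp add: complex_eq_iff)
  qed
qed

lemma herm_ip:
  assumes "hermf d X"
  shows "ip d (ap d X f) g = ip d f (ap d X g)"
proof -
  have "ip d (ap d X f) g = (\<Sum>i<d. \<Sum>j<d. X$$(i,j) * f j * cnj (g i))"
    unfolding ip_apL sum_distrib_right ..
  also have "\<dots> = (\<Sum>j<d. \<Sum>i<d. f j * (cnj (X$$(j,i)) * cnj (g i)))"
  proof (subst sum.swap, rule sum.cong[OF refl], rule sum.cong[OF refl])
    fix j i assume "j \<in> {..<d}" "i \<in> {..<d}"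
    then have "X$$(i,j) = cnj (X$$(j,i))" using assms unfolding hermf_def by blast
    then show "X$$(i,j) * f j * cnj (g i) = f j * (cnj (X$$(j,i)) * cnj (g i))" by simp
  qed
  also have "\<dots> = ip d f (ap d X g)"
    unfolding ip_apR cnj_sum complex_cnj_mult sum_distrib_left ..
  finally show ?thesis .
qed

lemma ip_conj: "ip d g f = cnj (ip d f g)"
  unfolding ip_def by (simp add: mult.commute)

lemma qf_expand:
  "qf d M (\<lambda>i. f i + t * g i) = qf d M f + cnj t * ip d (ap d M f) g + t * ip d (ap d M g) f + t * cnj t * qf d M g"
proof -
  have "ap d M (\<lambda>i. f i + t * g i) = (\<lambda>a. ap d M f a + t * ap d M g a)"
    using ap_lin[of d M 1 f t g] by simp
  then have "qf d M (\<lambda>i. f i + t * g i) = (\<Sum>i<d. (ap d M f i + t * ap d M g i) * (cnj (f i) + cnj t * cnj (g i)))"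
    unfolding qf_def ip_def by simp
  also have "\<dots> = (\<Sum>i<d. ap d M f i * cnj (f i) + cnj t * (ap d M f i * cnj (g i)) + t * (ap d M g i * cnj (f i)) + t * cnj t * (ap d M g i * cnj (g i)))"
    by (rule sum.cong[OF refl]) (simp add: algebra_simps)
  also have "\<dots> = qf d M f + cnj t * ip d (ap d M f) g + t * ip d (ap d M g) f + t * cnj t * qf d M g"
    unfolding qf_def ip_def sum.distrib sum_distrib_left ..
  finally show ?thesis .
qed

lemma real_cs_aux:
  fixes Qf Qg B :: real
  assumes "\<And>s. 0 \<le> Qf - 2 * s * B + s^2 * B * Qg" "0 \<le> Qf" "0 \<le> Qg" "0 \<le> B"
  shows "B \<le> Qf * Qg"
proof (cases "B = 0")
  case True then show ?thesis using assms by simp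
next
  case False
  then have Bp: "B > 0" using assms by simp
  show ?thesis
  proof (cases "Qg = 0")
    case True
    have "0 \<le> Qf - 2 * ((Qf + 1) / (2 * B)) * B + ((Qf + 1) / (2 * B))^2 * B * Qg" by (rule assms(1))
    also have "\<dots> = Qf - 2 * ((Qf + 1) / (2 * B)) * B" using True by simp
    also have "2 * ((Qf + 1) / (2 * B)) * B = Qf + 1" using Bp by simp
    finally show ?thesis by simp
  next
    case False
    then have Qp: "Qg > 0" using assms by simp
    have "0 \<le> Qf - 2 * (1/Qg) * B + (1/Qg)^2 * B * Qg" by (rule assms(1))
    also have "(1/Qg)^2 * B * Qg = B / Qg" using Qp by (simp add: power2_eq_square)
    also have "Qf - 2 * (1/Qg) * B + B / Qg = Qf - B / Qg" by simp
    finally have "B / Qg \<le> Qf" by simp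
    then show ?thesis using Qp by (simp add: divide_le_eq mult.commute)
  qed
qed

lemma psd_real: "psd d M \<Longrightarrow> qf d M f = complex_of_real (Re (qf d M f))"
proof -
  assume "psd d M"
  then have "Im (qf d M f) = 0" using psd_iff by blast
  then show ?thesis by (simp add: complex_eq_iff)
qed
lemma psd_nonneg: "psd d M \<Longrightarrow> 0 \<le> Re (qf d M f)"
  using psd_iff by blast

lemma psd_CS:
  assumes "psd d M"
  shows "(cmod (ip d (ap d M f) g))^2 \<le> Re (qf d M f) * Re (qf d M g)"
proof -
  define b where "b = ip d (ap d M f) g"
  have bg: "ip d (ap d M g) f = cnj b"
    unfolding b_def using herm_ip[OF psd_herm[OF assms], of g f] ip_conj by metis
  have "\<And>s::real. 0 \<le> Re (qf d M f) - 2 * s * (cmod b)^2 + s^2 * (cmod b)^2 * Re (qf d M g)"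
  proof -
    fix s :: real
    define t where "t = - (complex_of_real s * b)"
    have "0 \<le> Re (qf d M (\<lambda>i. f i + t * g i))" using psd_nonneg[OF assms] .
    also have "qf d M (\<lambda>i. f i + t * g i) = qf d M f + cnj t * b + t * cnj b + t * cnj t * complex_of_real (Re (qf d M g))"
      unfolding qf_expand bg b_def using psd_real[OF assms, of g] by simp
    also have "Re \<dots> = Re (qf d M f) - 2 * s * (cmod b)^2 + s^2 * (cmod b)^2 * Re (qf d M g)"
      unfolding t_def cmod_power2 by (simp add: algebra_simps power2_eq_square)
    finally show "0 \<le> Re (qf d M f) - 2 * s * (cmod b)^2 + s^2 * (cmod b)^2 * Re (qf d M g)" .
  qed
  then show ?thesis unfolding b_def[symmetric]
    by (intro real_cs_aux) (auto intro: psd_nonneg[OF assms])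
qed

lemma psd_zero_row:
  assumes "psd d R" "i < d" "j < d" "R$$(i,i) = 0"
  shows "R$$(j,i) = 0" "R$$(i,j) = 0"
proof -
  have "(cmod (ip d (ap d R (ee i)) (ee j)))^2 \<le> Re (qf d R (ee i)) * Re (qf d R (ee j))"
    by (rule psd_CS[OF assms(1)])
  also have "\<dots> = 0" using assms by (simp add: qf_ee)
  also have "ip d (ap d R (ee i)) (ee j) = R$$(j,i)" using assms by (simp add: ip_ee ap_ee)
  finally show "R$$(j,i) = 0" by simp
  moreover have "R$$(i,j) = cnj (R$$(j,i))" using psd_herm[OF assms(1)] assms unfolding hermf_def by blast
  ultimately show "R$$(i,j) = 0" by simp
qed

lemma psd_zero_all:
  assumes "psd d R" "\<forall>i<d. R$$(i,i) = 0" "i < d" "j < d"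
  shows "R$$(i,j) = 0"
  using psd_zero_row(2)[OF assms(1) assms(3) assms(4)] assms by blast

lemma qf_rank1_sub:
  "qf d (mat d d (\<lambda>(k,l). R$$(k,l) - w k * cnj (w l))) f = qf d R f - cnj (ip d w f) * ip d w f"
proof -
  have A: "ap d (mat d d (\<lambda>(k,l). R$$(k,l) - w k * cnj (w l))) f a = ap d R f a - w a * cnj (ip d w f)"
    if "a < d" for a
  proof -
    have "ap d (mat d d (\<lambda>(k,l). R$$(k,l) - w k * cnj (w l))) f a = (\<Sum>j<d. R$$(a,j) * f j - w a * (cnj (w j) * f j))"
      unfolding ap_in[OF that] using that by (intro sum.cong refl) (simp add: algebra_simps)
    also have "\<dots> = ap d R f a - w a * cnj (ip d w f)"
      unfolding ap_in[OF that] ip_def sum_subtractf cnj_sum sum_distrib_left by (simp add: mult.commute)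
    finally show ?thesis .
  qed
  have "qf d (mat d d (\<lambda>(k,l). R$$(k,l) - w k * cnj (w l))) f = (\<Sum>a<d. ap d R f a * cnj (f a) - cnj (ip d w f) * (w a * cnj (f a)))"
    unfolding qf_def ip_def[of d "ap d _ f"] by (intro sum.cong refl) (simp add: A algebra_simps)
  also have "\<dots> = qf d R f - cnj (ip d w f) * ip d w f"
    unfolding qf_def ip_def sum_subtractf sum_distrib_left ..
  finally show ?thesis .
qed

lemma cnj_self_mult: "cnj z * z = complex_of_real ((cmod z)^2)"
  by (subst mult.commute) (simp add: complex_mult_cnj cmod_power2)

lemma psd_decomp_aux:
  "card {i. i<d \<and> R$$(i,i) \<noteq> 0} = m \<Longrightarrow> psd d R \<Longrightarrow>
   \<exists>(N::nat) w. \<forall>i<d. \<forall>j<d. R$$(i,j) = (\<Sum>k<N. w k i * cnj (w k j))"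
proof (induction m arbitrary: R rule: less_induct)
  case (less m R)
  note psdR = less.prems(2)
  show ?case
  proof (cases "\<forall>i<d. R$$(i,i) = 0")
    case True
    show ?thesis
    proof (intro exI[of _ "0::nat"] exI[of _ "\<lambda>_ _. 0::complex"] allI impI)
      fix i j assume "i < d" "j < d"
      then have "R$$(i,j) = 0" by (rule psd_zero_all[OF psdR True])
      then show "R$$(i,j) = (\<Sum>k<(0::nat). 0 * cnj 0)" by simp
    qed
  next
    case False
    then obtain i0 where i0: "i0 < d" "R$$(i0,i0) \<noteq> 0" by blast
    define r where "r = Re (R$$(i0,i0))"
    have Rr: "R$$(i0,i0) = complex_of_real r"
      using psd_real[OF psdR, of "ee i0"] i0 by (simp add: qf_ee r_def)
    have "r \<ge> 0" using psd_nonneg[OF psdR, of "ee i0"] i0 by (simp add: qf_ee r_def)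
    then have rp: "r > 0" using i0 Rr by (cases "r = 0") auto
    define w0 where "w0 = (\<lambda>k. R$$(k,i0) / complex_of_real (sqrt r))"
    define R' where "R' = mat d d (\<lambda>(k,l). R$$(k,l) - w0 k * cnj (w0 l))"
    have ipw: "ip d w0 f = ip d (ap d R (ee i0)) f / complex_of_real (sqrt r)" for f
      unfolding ip_def w0_def ap_ee[OF i0(1)] sum_divide_distrib by (simp add: field_simps)
    have psdR': "psd d R'"
      unfolding psd_iff
    proof (intro conjI allI)
      show "R' \<in> carrier_mat d d" by (simp add: R'_def)
      fix f
      have cs: "(cmod (ip d (ap d R (ee i0)) f))^2 \<le> r * Re (qf d R f)"
        using psd_CS[OF psdR, of "ee i0" f] i0 by (simp add: qf_ee r_def)
      have "(cmod (ip d w0 f))^2 = (cmod (ip d (ap d R (ee i0)) f))^2 / r"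
        using ipw rp by (simp add: norm_divide power_divide)
      then have c: "(cmod (ip d w0 f))^2 \<le> Re (qf d R f)"
        using cs rp by (simp add: divide_le_eq mult.commute)
      have q: "qf d R' f = complex_of_real (Re (qf d R f) - (cmod (ip d w0 f))^2)"
        unfolding R'_def qf_rank1_sub cnj_self_mult using psd_real[OF psdR, of f] by simp
      show "Im (qf d R' f) = 0" unfolding q by simp
      show "0 \<le> Re (qf d R' f)" unfolding q using c by simp
    qed
    have sub: "{i. i<d \<and> R'$$(i,i) \<noteq> 0} \<subseteq> {i. i<d \<and> R$$(i,i) \<noteq> 0} - {i0}"
    proof
      fix k assume "k \<in> {i. i<d \<and> R'$$(i,i) \<noteq> 0}"
      then have k: "k<d" "R'$$(k,k) \<noteq> 0" by auto
      have R'kk: "R'$$(k,k) = R$$(k,k) - w0 k * cnj (w0 k)" using k(1) by (simp add: R'_def)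
      have "w0 i0 * cnj (w0 i0) = R$$(i0,i0)"
      proof -
        have "w0 i0 * cnj (w0 i0) = complex_of_real (r * r / (sqrt r * sqrt r))"
          unfolding w0_def Rr by (simp flip: of_real_mult)
        also have "\<dots> = complex_of_real r" using rp by simp
        finally show ?thesis using Rr by simp
      qed
      then have ki: "k \<noteq> i0" using k R'kk by auto
      have "R$$(k,k) \<noteq> 0"
      proof
        assume "R$$(k,k) = 0"
        then have "R$$(k,i0) = 0" using psd_zero_row(2)[OF psdR k(1) i0(1)] by simp
        then have "w0 k = 0" by (simp add: w0_def)
        then show False using k R'kk \<open>R$$(k,k) = 0\<close> by simp
      qed
      then show "k \<in> {i. i<d \<and> R$$(i,i) \<noteq> 0} - {i0}" using k ki by auto
    qed
    have fin: "finite {i. i<d \<and> R$$(i,i) \<noteq> 0}" by simp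
    have "card {i. i<d \<and> R'$$(i,i) \<noteq> 0} \<le> card ({i. i<d \<and> R$$(i,i) \<noteq> 0} - {i0})"
      by (rule card_mono[OF _ sub]) simp
    also have "\<dots> < card {i. i<d \<and> R$$(i,i) \<noteq> 0}"
      by (rule card_Diff1_less[OF fin]) (simp add: i0)
    finally have "card {i. i<d \<and> R'$$(i,i) \<noteq> 0} < m" using less.prems(1) by simp
    from less.IH[OF this refl psdR'] obtain N :: nat and w where IH: "\<forall>i<d. \<forall>j<d. R'$$(i,j) = (\<Sum>k<N. w k i * cnj (w k j))"
      by blast
    show ?thesis
    proof (intro exI[of _ "Suc N"] exI[of _ "\<lambda>k. if k < N then w k else w0"] allI impI)
      fix i j assume ij: "i<d" "j<d"
      have "R$$(i,j) = R'$$(i,j) + w0 i * cnj (w0 j)" using ij by (simp add: R'_def)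
      then show "R$$(i,j) = (\<Sum>k<Suc N. (if k<N then w k else w0) i * cnj ((if k<N then w k else w0) j))"
        using IH ij by simp
    qed
  qed
qed

lemma psd_decomp:
  "psd d R \<Longrightarrow> \<exists>(N::nat) w. \<forall>i<d. \<forall>j<d. R$$(i,j) = (\<Sum>k<N. w k i * cnj (w k j))"
  using psd_decomp_aux by blast

lemma trace_decomp:
  assumes "R \<in> carrier_mat d d" "X \<in> carrier_mat d d"
    and "\<forall>i<d. \<forall>j<d. R$$(i,j) = (\<Sum>k<(N::nat). w k i * cnj (w k j))"
  shows "mtrace (R * X) = (\<Sum>k<N. qf d X (w k))"
proof -
  have "mtrace (R * X) = (\<Sum>i<d. \<Sum>j<d. R$$(i,j) * X$$(j,i))"
    unfolding mtrace_def using assms(1,2)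
    by (intro sum.cong) (auto simp: scalar_prod_def intro!: sum.cong)
  also have "\<dots> = (\<Sum>i<d. \<Sum>j<d. \<Sum>k<N. X$$(j,i) * w k i * cnj (w k j))"
    using assms(3) by (intro sum.cong refl) (simp add: sum_distrib_left sum_distrib_right mult.commute mult.left_commute)
  also have "\<dots> = (\<Sum>k<N. \<Sum>j<d. \<Sum>i<d. X$$(j,i) * w k i * cnj (w k j))"
    by (subst sum.swap, subst (2) sum.swap, subst sum.swap, rule refl)
  also have "\<dots> = (\<Sum>k<N. qf d X (w k))"
    unfolding qf_def ip_apL sum_distrib_right ..
  finally show ?thesis .
qed

definition zo :: "nat \<Rightarrow> (nat \<Rightarrow> complex) \<Rightarrow> bool" where
  "zo d f \<longleftrightarrow> (\<forall>i\<ge>d. f i = 0)"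

lemma zo_ap: "zo d (ap d X f)"
  unfolding zo_def ap_def by simp

lemma sum_split_mult:
  fixes g :: "nat \<Rightarrow> 'a::comm_monoid_add"
  shows "(\<Sum>i<n*m. g i) = (\<Sum>p<n. \<Sum>q<m. g (p*m+q))"
proof (induction n)
  case 0 then show ?case by simp
next
  case (Suc n)
  have "{..<Suc n * m} = {..<n*m} \<union> {n*m..<n*m+m}" by auto
  then have "(\<Sum>i<Suc n*m. g i) = (\<Sum>i<n*m. g i) + (\<Sum>i\<in>{n*m..<n*m+m}. g i)"
    by (simp add: sum.union_disjoint ivl_disj_int)
  also have "(\<Sum>i\<in>{n*m..<n*m+m}. g i) = (\<Sum>q<m. g (n*m+q))"
    using sum.shift_bounds_nat_ivl[of g 0 "n*m" m] by (simp add: lessThan_atLeast0 add.commute)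
  finally show ?case using Suc by simp
qed

lemma divmod_iff:
  assumes "(m::nat) > 0"
  shows "(j div m = a \<and> j mod m = b) \<longleftrightarrow> (j = a*m + b \<and> b < m)"
  using assms by (auto simp: mult.commute)

lemma kron_carrier: "A \<in> carrier_mat nA nA \<Longrightarrow> B \<in> carrier_mat nB nB \<Longrightarrow> kron A B \<in> carrier_mat (nA*nB) (nA*nB)"
  by (simp add: kron_def)

lemma kron_index:
  assumes "A \<in> carrier_mat nA nA" "B \<in> carrier_mat nB nB" "i < nA*nB" "j < nA*nB"
  shows "kron A B $$ (i,j) = A$$(i div nB, j div nB) * B$$(i mod nB, j mod nB)"
  using assms by (simp add: kron_def)

lemma kron_idx: "i < dim_row A * dim_row B \<Longrightarrow> j < dim_col A * dim_col B \<Longrightarrow>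
  kron A B $$ (i,j) = A $$ (i div dim_row B, j div dim_col B) * B $$ (i mod dim_row B, j mod dim_col B)"
  by (simp add: kron_def)

lemma div_lt: "(i::nat) < nA*nB \<Longrightarrow> i div nB < nA"
  by (cases "nB = 0") (auto simp: div_less_iff_less_mult)
lemma mod_lt: "(i::nat) < nA*nB \<Longrightarrow> i mod nB < nB"
  by (cases "nB = 0") auto

lemma idx_lt: "a < nA \<Longrightarrow> b < (nB::nat) \<Longrightarrow> a*nB + b < nA*nB"
proof -
  assume "a < nA" "b < nB"
  then have "a*nB + b < a*nB + nB" by simp
  also have "\<dots> = (a+1)*nB" by simp
  also have "\<dots> \<le> nA*nB" using \<open>a < nA\<close> by (intro mult_right_mono) auto
  finally show ?thesis .
qed

lemma eq_idx: "(nB::nat) > 0 \<Longrightarrow> (i = j) \<longleftrightarrow> (i div nB = j div nB \<and> i mod nB = j mod nB)"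
  by (metis div_mult_mod_eq)

lemma kron_mixed1:
  assumes P: "P \<in> carrier_mat nA nA" and Q: "Q \<in> carrier_mat nB nB"
  shows "kron P (1\<^sub>m nB) * kron (1\<^sub>m nA) Q = kron P Q"
proof (rule eq_matI)
  show "dim_row (kron P (1\<^sub>m nB) * kron (1\<^sub>m nA) Q) = dim_row (kron P Q)"
    "dim_col (kron P (1\<^sub>m nB) * kron (1\<^sub>m nA) Q) = dim_col (kron P Q)" using P Q by (simp_all add: kron_def)
  fix i l assume "i < dim_row (kron P Q)" "l < dim_col (kron P Q)"
  then have il: "i < nA*nB" "l < nA*nB" using P Q by (simp_all add: kron_def)
  then have m0: "nB > 0" by (cases nB) auto
  define j0 where "j0 = (l div nB) * nB + i mod nB"
  have j0: "j0 < nA*nB" unfolding j0_def by (rule idx_lt[OF div_lt[OF il(2)] mod_lt[OF il(1)]])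
  have "(kron P (1\<^sub>m nB) * kron (1\<^sub>m nA) Q) $$ (i,l) = (\<Sum>j<nA*nB. kron P (1\<^sub>m nB) $$ (i,j) * kron (1\<^sub>m nA) Q $$ (j,l))"
    using P Q il by (simp add: kron_def scalar_prod_def lessThan_atLeast0)
  also have "\<dots> = (\<Sum>j<nA*nB. if j = j0 then P$$(i div nB, l div nB) * Q$$(i mod nB, l mod nB) else 0)"
  proof (rule sum.cong[OF refl])
    fix j assume "j \<in> {..<nA*nB}"
    then have j: "j < nA*nB" by simp
    have e: "kron P (1\<^sub>m nB) $$ (i,j) * kron (1\<^sub>m nA) Q $$ (j,l) =
      P$$(i div nB, j div nB) * (if i mod nB = j mod nB then 1 else 0) * ((if j div nB = l div nB then 1 else 0) * Q$$(j mod nB, l mod nB))"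
      using P Q il j by (simp add: kron_idx div_lt mod_lt carrier_matD)
    have "j = j0 \<longleftrightarrow> (j div nB = l div nB \<and> j mod nB = i mod nB)"
      unfolding j0_def using divmod_iff[OF m0] mod_lt[OF il(1)] by blast
    then show "kron P (1\<^sub>m nB) $$ (i,j) * kron (1\<^sub>m nA) Q $$ (j,l) = (if j = j0 then P$$(i div nB, l div nB) * Q$$(i mod nB, l mod nB) else 0)"
      unfolding e by auto
  qed
  also have "\<dots> = P$$(i div nB, l div nB) * Q$$(i mod nB, l mod nB)" using j0 by simp
  also have "\<dots> = kron P Q $$ (i,l)" using P Q il by (simp add: kron_idx carrier_matD)
  finally show "(kron P (1\<^sub>m nB) * kron (1\<^sub>m nA) Q) $$ (i,l) = kron P Q $$ (i,l)" .
qed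

lemma kron_mixed2:
  assumes P: "P \<in> carrier_mat nA nA" and Q: "Q \<in> carrier_mat nB nB"
  shows "kron (1\<^sub>m nA) Q * kron P (1\<^sub>m nB) = kron P Q"
proof (rule eq_matI)
  show "dim_row (kron (1\<^sub>m nA) Q * kron P (1\<^sub>m nB)) = dim_row (kron P Q)"
    "dim_col (kron (1\<^sub>m nA) Q * kron P (1\<^sub>m nB)) = dim_col (kron P Q)" using P Q by (simp_all add: kron_def)
  fix i l assume "i < dim_row (kron P Q)" "l < dim_col (kron P Q)"
  then have il: "i < nA*nB" "l < nA*nB" using P Q by (simp_all add: kron_def)
  then have m0: "nB > 0" by (cases nB) auto
  define j0 where "j0 = (i div nB) * nB + l mod nB"
  have j0: "j0 < nA*nB" unfolding j0_def by (rule idx_lt[OF div_lt[OF il(1)] mod_lt[OF il(2)]])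
  have "(kron (1\<^sub>m nA) Q * kron P (1\<^sub>m nB)) $$ (i,l) = (\<Sum>j<nA*nB. kron (1\<^sub>m nA) Q $$ (i,j) * kron P (1\<^sub>m nB) $$ (j,l))"
    using P Q il by (simp add: kron_def scalar_prod_def lessThan_atLeast0)
  also have "\<dots> = (\<Sum>j<nA*nB. if j = j0 then P$$(i div nB, l div nB) * Q$$(i mod nB, l mod nB) else 0)"
  proof (rule sum.cong[OF refl])
    fix j assume "j \<in> {..<nA*nB}"
    then have j: "j < nA*nB" by simp
    have e: "kron (1\<^sub>m nA) Q $$ (i,j) * kron P (1\<^sub>m nB) $$ (j,l) =
      (if i div nB = j div nB then 1 else 0) * Q$$(i mod nB, j mod nB) * (P$$(j div nB, l div nB) * (if j mod nB = l mod nB then 1 else 0))"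
      using P Q il j by (simp add: kron_idx div_lt mod_lt carrier_matD)
    have "j = j0 \<longleftrightarrow> (j div nB = i div nB \<and> j mod nB = l mod nB)"
      unfolding j0_def using divmod_iff[OF m0] mod_lt[OF il(2)] by blast
    then show "kron (1\<^sub>m nA) Q $$ (i,j) * kron P (1\<^sub>m nB) $$ (j,l) = (if j = j0 then P$$(i div nB, l div nB) * Q$$(i mod nB, l mod nB) else 0)"
      unfolding e by auto
  qed
  also have "\<dots> = P$$(i div nB, l div nB) * Q$$(i mod nB, l mod nB)" using j0 by simp
  also have "\<dots> = kron P Q $$ (i,l)" using P Q il by (simp add: kron_idx carrier_matD)
  finally show "(kron (1\<^sub>m nA) Q * kron P (1\<^sub>m nB)) $$ (i,l) = kron P Q $$ (i,l)" .
qed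

lemma ap_mult:
  assumes "X \<in> carrier_mat d d" "Y \<in> carrier_mat d d"
  shows "ap d (X*Y) f = ap d X (ap d Y f)"
proof (rule ext)
  fix i
  show "ap d (X*Y) f i = ap d X (ap d Y f) i"
  proof (cases "i < d")
    case False then show ?thesis by (simp add: ap_def)
  next
    case True
    have "ap d (X*Y) f i = (\<Sum>j<d. (\<Sum>k<d. X$$(i,k) * Y$$(k,j)) * f j)"
      using assms True by (simp add: ap_in scalar_prod_def lessThan_atLeast0)
    also have "\<dots> = (\<Sum>k<d. X$$(i,k) * (\<Sum>j<d. Y$$(k,j) * f j))"
      unfolding sum_distrib_right sum_distrib_left by (subst sum.swap) (simp add: mult.assoc)
    also have "\<dots> = ap d X (ap d Y f) i"
      using True by (simp add: ap_in)
    finally show ?thesis .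
  qed
qed

lemma ap_sum_id:
  assumes "finite L" "\<forall>i<d. \<forall>j<d. (\<Sum>l\<in>L. X l $$ (i,j)) = (if i = j then 1 else 0)" "zo d f"
  shows "(\<Sum>l\<in>L. ap d (X l) f i) = f i"
proof (cases "i < d")
  case False then show ?thesis using assms(3) by (simp add: ap_def zo_def)
next
  case True
  have "(\<Sum>l\<in>L. ap d (X l) f i) = (\<Sum>j<d. (\<Sum>l\<in>L. X l $$ (i,j)) * f j)"
    using True unfolding ap_in[OF True] sum_distrib_right by (subst sum.swap) simp
  also have "\<dots> = (\<Sum>j<d. (if i = j then f j else 0))"
    using assms(2) True by (intro sum.cong refl) simp
  also have "\<dots> = f i" using True by simp
  finally show ?thesis .
qed

lemma pq_div: "(q::nat) < m \<Longrightarrow> (p*m+q) div m = p" "(q::nat) < m \<Longrightarrow> (p*m+q) mod m = q"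
  by auto

lemma kron_sum_left:
  assumes "finite L" "\<forall>l\<in>L. P l \<in> carrier_mat nA nA"
    "\<forall>i<nA. \<forall>j<nA. (\<Sum>l\<in>L. P l $$ (i,j)) = (if i = j then 1 else 0)" "i < nA*nB" "j < nA*nB"
  shows "(\<Sum>l\<in>L. kron (P l) (1\<^sub>m nB) $$ (i,j)) = (if i = j then 1 else 0)"
proof -
  have m0: "nB > 0" using assms(4) by (cases nB) auto
  have "(\<Sum>l\<in>L. kron (P l) (1\<^sub>m nB) $$ (i,j)) = (\<Sum>l\<in>L. P l $$ (i div nB, j div nB)) * (if i mod nB = j mod nB then 1 else 0)"
    unfolding sum_distrib_right
  proof (rule sum.cong[OF refl])
    fix l assume "l \<in> L"
    then have "P l \<in> carrier_mat nA nA" using assms(2) by blast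
    then show "kron (P l) (1\<^sub>m nB) $$ (i,j) = P l $$ (i div nB, j div nB) * (if i mod nB = j mod nB then 1 else 0)"
      using assms(4,5) by (simp add: kron_idx carrier_matD mod_lt)
  qed
  also have "\<dots> = (if i div nB = j div nB then 1 else 0) * (if i mod nB = j mod nB then 1 else 0)"
    using assms(3) div_lt[OF assms(4)] div_lt[OF assms(5)] by simp
  also have "\<dots> = (if i = j then 1 else 0)" using eq_idx[OF m0, of i j] by auto
  finally show ?thesis .
qed

lemma kron_sum_right:
  assumes "finite L" "\<forall>l\<in>L. Q l \<in> carrier_mat nB nB"
    "\<forall>i<nB. \<forall>j<nB. (\<Sum>l\<in>L. Q l $$ (i,j)) = (if i = j then 1 else 0)" "i < nA*nB" "j < nA*nB"
  shows "(\<Sum>l\<in>L. kron (1\<^sub>m nA) (Q l) $$ (i,j)) = (if i = j then 1 else 0)"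
proof -
  have m0: "nB > 0" using assms(4) by (cases nB) auto
  have "(\<Sum>l\<in>L. kron (1\<^sub>m nA) (Q l) $$ (i,j)) = (if i div nB = j div nB then 1 else 0) * (\<Sum>l\<in>L. Q l $$ (i mod nB, j mod nB))"
    unfolding sum_distrib_left
  proof (rule sum.cong[OF refl])
    fix l assume "l \<in> L"
    then have "Q l \<in> carrier_mat nB nB" using assms(2) by blast
    then show "kron (1\<^sub>m nA) (Q l) $$ (i,j) = (if i div nB = j div nB then 1 else 0) * Q l $$ (i mod nB, j mod nB)"
      using assms(4,5) by (simp add: kron_idx carrier_matD div_lt)
  qed
  also have "\<dots> = (if i div nB = j div nB then 1 else 0) * (if i mod nB = j mod nB then 1 else 0)"
    using assms(3) mod_lt[OF assms(4)] mod_lt[OF assms(5)] by simp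
  also have "\<dots> = (if i = j then 1 else 0)" using eq_idx[OF m0, of i j] by auto
  finally show ?thesis .
qed

lemma herm_kron_left:
  assumes "hermf nA P" "P \<in> carrier_mat nA nA"
  shows "hermf (nA*nB) (kron P (1\<^sub>m nB))"
  unfolding hermf_def
proof (intro allI impI)
  fix i j assume ij: "i < nA*nB" "j < nA*nB"
  have "P$$(j div nB, i div nB) = cnj (P$$(i div nB, j div nB))"
    using assms(1) div_lt[OF ij(1)] div_lt[OF ij(2)] unfolding hermf_def by blast
  then show "kron P (1\<^sub>m nB) $$ (j,i) = cnj (kron P (1\<^sub>m nB) $$ (i,j))"
    using assms(2) ij by (simp add: kron_idx carrier_matD mod_lt)
qed

lemma herm_kron_right:
  assumes "hermf nB Q" "Q \<in> carrier_mat nB nB"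
  shows "hermf (nA*nB) (kron (1\<^sub>m nA) Q)"
  unfolding hermf_def
proof (intro allI impI)
  fix i j assume ij: "i < nA*nB" "j < nA*nB"
  have "Q$$(j mod nB, i mod nB) = cnj (Q$$(i mod nB, j mod nB))"
    using assms(1) mod_lt[OF ij(1)] mod_lt[OF ij(2)] unfolding hermf_def by blast
  then show "kron (1\<^sub>m nA) Q $$ (j,i) = cnj (kron (1\<^sub>m nA) Q $$ (i,j))"
    using assms(2) ij by (simp add: kron_idx carrier_matD div_lt)
qed

lemma qf_kron_left:
  assumes P: "P \<in> carrier_mat nA nA"
  shows "qf (nA*nB) (kron P (1\<^sub>m nB)) f = (\<Sum>q<nB. qf nA P (\<lambda>p. f (p*nB+q)))"
proof -
  have inner: "(\<Sum>j<nA*nB. kron P (1\<^sub>m nB) $$ (p*nB+q, j) * f j) = (\<Sum>p'<nA. P$$(p,p') * f (p'*nB+q))"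
    if pq: "p < nA" "q < nB" for p q
  proof -
    have "(\<Sum>j<nA*nB. kron P (1\<^sub>m nB) $$ (p*nB+q, j) * f j) =
      (\<Sum>p'<nA. \<Sum>q'<nB. kron P (1\<^sub>m nB) $$ (p*nB+q, p'*nB+q') * f (p'*nB+q'))"
      by (rule sum_split_mult)
    also have "\<dots> = (\<Sum>p'<nA. \<Sum>q'<nB. if q' = q then P$$(p,p') * f (p'*nB+q) else 0)"
      using P pq idx_lt by (intro sum.cong refl) (auto simp: kron_idx carrier_matD pq_div)
    also have "\<dots> = (\<Sum>p'<nA. P$$(p,p') * f (p'*nB+q))"
      using pq by simp
    finally show ?thesis .
  qed
  have "qf (nA*nB) (kron P (1\<^sub>m nB)) f = (\<Sum>i<nA*nB. (\<Sum>j<nA*nB. kron P (1\<^sub>m nB) $$ (i, j) * f j) * cnj (f i))"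
    unfolding qf_def ip_apL ..
  also have "\<dots> = (\<Sum>p<nA. \<Sum>q<nB. (\<Sum>j<nA*nB. kron P (1\<^sub>m nB) $$ (p*nB+q, j) * f j) * cnj (f (p*nB+q)))"
    by (rule sum_split_mult)
  also have "\<dots> = (\<Sum>p<nA. \<Sum>q<nB. (\<Sum>p'<nA. P$$(p,p') * f (p'*nB+q)) * cnj (f (p*nB+q)))"
    using inner by (intro sum.cong refl) simp
  also have "\<dots> = (\<Sum>q<nB. \<Sum>p<nA. (\<Sum>p'<nA. P$$(p,p') * f (p'*nB+q)) * cnj (f (p*nB+q)))"
    by (rule sum.swap)
  also have "\<dots> = (\<Sum>q<nB. qf nA P (\<lambda>p. f (p*nB+q)))"
    unfolding qf_def ip_apL ..
  finally show ?thesis .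
qed

lemma qf_kron_right:
  assumes Q: "Q \<in> carrier_mat nB nB"
  shows "qf (nA*nB) (kron (1\<^sub>m nA) Q) f = (\<Sum>p<nA. qf nB Q (\<lambda>q. f (p*nB+q)))"
proof -
  have inner: "(\<Sum>j<nA*nB. kron (1\<^sub>m nA) Q $$ (p*nB+q, j) * f j) = (\<Sum>q'<nB. Q$$(q,q') * f (p*nB+q'))"
    if pq: "p < nA" "q < nB" for p q
  proof -
    have "(\<Sum>j<nA*nB. kron (1\<^sub>m nA) Q $$ (p*nB+q, j) * f j) =
      (\<Sum>p'<nA. \<Sum>q'<nB. kron (1\<^sub>m nA) Q $$ (p*nB+q, p'*nB+q') * f (p'*nB+q'))"
      by (rule sum_split_mult)
    also have "\<dots> = (\<Sum>p'<nA. if p' = p then (\<Sum>q'<nB. Q$$(q,q') * f (p*nB+q')) else 0)"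
      using Q pq idx_lt by (intro sum.cong refl) (auto simp: kron_idx carrier_matD pq_div)
    also have "\<dots> = (\<Sum>q'<nB. Q$$(q,q') * f (p*nB+q'))"
      using pq by simp
    finally show ?thesis .
  qed
  have "qf (nA*nB) (kron (1\<^sub>m nA) Q) f = (\<Sum>i<nA*nB. (\<Sum>j<nA*nB. kron (1\<^sub>m nA) Q $$ (i, j) * f j) * cnj (f i))"
    unfolding qf_def ip_apL ..
  also have "\<dots> = (\<Sum>p<nA. \<Sum>q<nB. (\<Sum>j<nA*nB. kron (1\<^sub>m nA) Q $$ (p*nB+q, j) * f j) * cnj (f (p*nB+q)))"
    by (rule sum_split_mult)
  also have "\<dots> = (\<Sum>p<nA. \<Sum>q<nB. (\<Sum>q'<nB. Q$$(q,q') * f (p*nB+q')) * cnj (f (p*nB+q)))"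
    using inner by (intro sum.cong refl) simp
  also have "\<dots> = (\<Sum>p<nA. qf nB Q (\<lambda>q. f (p*nB+q)))"
    unfolding qf_def ip_apL ..
  finally show ?thesis .
qed

lemma psd_kron_left:
  assumes "psd nA P"
  shows "psd (nA*nB) (kron P (1\<^sub>m nB))"
proof -
  have P: "P \<in> carrier_mat nA nA" using assms psd_iff by blast
  show ?thesis unfolding psd_iff
  proof (intro conjI allI)
    show "kron P (1\<^sub>m nB) \<in> carrier_mat (nA * nB) (nA * nB)" using P by (simp add: kron_carrier)
    fix f
    show "Im (qf (nA * nB) (kron P (1\<^sub>m nB)) f) = 0" "0 \<le> Re (qf (nA * nB) (kron P (1\<^sub>m nB)) f)"
      unfolding qf_kron_left[OF P] using assms psd_iff
      by (auto simp: Im_sum Re_sum intro!: sum.neutral sum_nonneg)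
  qed
qed

lemma psd_kron_right:
  assumes "psd nB Q"
  shows "psd (nA*nB) (kron (1\<^sub>m nA) Q)"
proof -
  have Q: "Q \<in> carrier_mat nB nB" using assms psd_iff by blast
  show ?thesis unfolding psd_iff
  proof (intro conjI allI)
    show "kron (1\<^sub>m nA) Q \<in> carrier_mat (nA * nB) (nA * nB)" using Q by (simp add: kron_carrier)
    fix f
    show "Im (qf (nA * nB) (kron (1\<^sub>m nA) Q) f) = 0" "0 \<le> Re (qf (nA * nB) (kron (1\<^sub>m nA) Q) f)"
      unfolding qf_kron_right[OF Q] using assms psd_iff
      by (auto simp: Im_sum Re_sum intro!: sum.neutral sum_nonneg)
  qed
qed

definition nrm :: "nat \<Rightarrow> (nat \<Rightarrow> complex) \<Rightarrow> real" where
  "nrm d f = Re (ip d f f)"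

lemma self_cnj_mult: "z * cnj z = complex_of_real ((cmod z)^2)"
  by (metis cnj_self_mult mult.commute)

lemma ip_self: "ip d f f = complex_of_real (nrm d f)"
proof -
  have "ip d f f = (\<Sum>i<d. complex_of_real ((cmod (f i))^2))"
    unfolding ip_def by (intro sum.cong refl) (rule self_cnj_mult)
  then show ?thesis unfolding nrm_def by simp
qed

lemma nrm_sum: "nrm d f = (\<Sum>i<d. (cmod (f i))^2)"
  unfolding nrm_def ip_def self_cnj_mult Re_sum by simp

lemma nrm_nonneg: "0 \<le> nrm d f"
  unfolding nrm_sum by (simp add: sum_nonneg)

lemma nrm_zero: "nrm d f = 0 \<Longrightarrow> i < d \<Longrightarrow> f i = 0"
  unfolding nrm_sum by (subst (asm) sum_nonneg_eq_0_iff) auto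

lemma ip_linL: "ip d (\<lambda>i. a * u i + b * v i) g = a * ip d u g + b * ip d v g"
  unfolding ip_def by (simp add: algebra_simps sum.distrib sum_distrib_left)

lemma ip_linR: "ip d f (\<lambda>i. a * u i + b * v i) = cnj a * ip d f u + cnj b * ip d f v"
  unfolding ip_def by (simp add: algebra_simps sum.distrib sum_distrib_left)

lemma ip_diffL: "ip d (\<lambda>i. u i - v i) g = ip d u g - ip d v g"
  unfolding ip_def by (simp add: algebra_simps sum_subtractf)

lemma ip_diffR: "ip d f (\<lambda>i. u i - v i) = ip d f u - ip d f v"
  unfolding ip_def by (simp add: algebra_simps sum_subtractf)

lemma ap_diff: "ap d X (\<lambda>i. u i - v i) = (\<lambda>i. ap d X u i - ap d X v i)"
  using ap_lin[of d X 1 u "-1" v] by simp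

lemma ap_smult: "ap d X (\<lambda>i. a * u i) = (\<lambda>i. a * ap d X u i)"
  using ap_lin[of d X a u 0 u] by simp

lemma nrm_diff: "nrm d (\<lambda>i. u i - v i) = nrm d u - 2 * Re (ip d u v) + nrm d v"
proof -
  have "ip d (\<lambda>i. u i - v i) (\<lambda>i. u i - v i) = ip d u u - ip d u v - ip d v u + ip d v v"
    unfolding ip_diffL ip_diffR by simp
  moreover have "Re (ip d v u) = Re (ip d u v)" using ip_conj[of d v u] by simp
  ultimately show ?thesis unfolding nrm_def by simp
qed

lemma zo_diff: "zo d u \<Longrightarrow> zo d v \<Longrightarrow> zo d (\<lambda>i. u i - v i)"
  unfolding zo_def by simp

lemma zo_eq: "zo d u \<Longrightarrow> zo d v \<Longrightarrow> (\<And>i. i < d \<Longrightarrow> u i = v i) \<Longrightarrow> u = v"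
  unfolding zo_def by (rule ext) (metis not_less)

lemma nrm_zero_eq: "zo d u \<Longrightarrow> zo d v \<Longrightarrow> nrm d (\<lambda>i. u i - v i) = 0 \<Longrightarrow> u = v"
  by (rule zo_eq) (auto dest: nrm_zero)

definition obs :: "nat \<Rightarrow> complex mat \<Rightarrow> complex mat \<Rightarrow> (nat \<Rightarrow> complex) \<Rightarrow> (nat \<Rightarrow> complex)" where
  "obs d P0 P1 f = (\<lambda>i. ap d P0 f i - ap d P1 f i)"

lemma zo_obs: "zo d (obs d P0 P1 f)"
  unfolding obs_def by (rule zo_diff[OF zo_ap zo_ap])

lemma obs_lin: "obs d P0 P1 (\<lambda>i. a * u i + b * v i) = (\<lambda>i. a * obs d P0 P1 u i + b * obs d P0 P1 v i)"
  unfolding obs_def ap_lin by (simp add: algebra_simps)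

lemma obs_herm:
  assumes "psd d P0" "psd d P1"
  shows "ip d (obs d P0 P1 f) g = ip d f (obs d P0 P1 g)"
  unfolding obs_def ip_diffL ip_diffR
  using herm_ip[OF psd_herm[OF assms(1)]] herm_ip[OF psd_herm[OF assms(2)]] by simp

lemma obs_contr:
  assumes P0: "psd d P0" and P1: "psd d P1"
    and S: "\<And>f i. zo d f \<Longrightarrow> ap d P0 f i + ap d P1 f i = f i" and f: "zo d f"
  shows "nrm d (obs d P0 P1 f) \<le> nrm d f"
proof -
  define u where "u = ap d P0 f"
  have v: "ap d P1 f = (\<lambda>i. f i - u i)" unfolding u_def using S[OF f] by (auto simp: algebra_simps)
  have uz: "zo d u" unfolding u_def by (rule zo_ap)
  have Ou: "obs d P0 P1 f = (\<lambda>i. u i - (f i - u i))" unfolding obs_def v u_def ..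
  have "nrm d (obs d P0 P1 f) = nrm d u - 2 * Re (ip d u (\<lambda>i. f i - u i)) + nrm d (\<lambda>i. f i - u i)"
    unfolding Ou by (rule nrm_diff)
  also have "\<dots> = nrm d f + 4 * nrm d u - 4 * Re (ip d u f)"
    unfolding nrm_diff ip_diffR using ip_conj[of d f u] by (simp add: nrm_def)
  finally have e: "nrm d (obs d P0 P1 f) = nrm d f + 4 * nrm d u - 4 * Re (ip d u f)" .
  have quf: "ip d u f = qf d P0 f" unfolding u_def qf_def ..
  have q0: "Re (qf d P0 u) \<le> nrm d u"
  proof -
    have "ip d (ap d P0 u) u + ip d (ap d P1 u) u = ip d (\<lambda>i. 1 * ap d P0 u i + 1 * ap d P1 u i) u"
      unfolding ip_linL by simp
    also have "(\<lambda>i. 1 * ap d P0 u i + 1 * ap d P1 u i) = u" using S[OF uz] by simp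
    finally have "qf d P0 u + qf d P1 u = ip d u u" unfolding qf_def .
    then have "Re (qf d P0 u) + Re (qf d P1 u) = nrm d u" unfolding nrm_def by (metis plus_complex.sel(1))
    moreover have "0 \<le> Re (qf d P1 u)" by (rule psd_nonneg[OF P1])
    ultimately show ?thesis by simp
  qed
  have cs: "(cmod (ip d (ap d P0 f) u))^2 \<le> Re (qf d P0 f) * Re (qf d P0 u)" by (rule psd_CS[OF P0])
  have "ip d (ap d P0 f) u = complex_of_real (nrm d u)" unfolding u_def[symmetric] by (rule ip_self)
  then have "(nrm d u)^2 \<le> Re (qf d P0 f) * Re (qf d P0 u)" using cs by (simp add: nrm_nonneg)
  also have "\<dots> \<le> Re (qf d P0 f) * nrm d u" using q0 psd_nonneg[OF P0] by (intro mult_left_mono) auto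
  finally have "nrm d u * nrm d u \<le> Re (qf d P0 f) * nrm d u" by (simp add: power2_eq_square)
  then have "nrm d u \<le> Re (qf d P0 f)"
    using nrm_nonneg[of d u] psd_nonneg[OF P0, of f]
    by (cases "nrm d u = 0") (auto simp: mult_le_cancel_right)
  then show ?thesis unfolding e quf by simp
qed

lemma obs_sq:
  assumes P0: "psd d P0" and P1: "psd d P1"
    and S: "\<And>f i. zo d f \<Longrightarrow> ap d P0 f i + ap d P1 f i = f i" and f: "zo d f"
    and eq: "nrm d (obs d P0 P1 f) = nrm d f"
  shows "obs d P0 P1 (obs d P0 P1 f) = f"
proof -
  let ?O = "obs d P0 P1"
  have c1: "nrm d (?O (?O f)) \<le> nrm d (?O f)" by (rule obs_contr[OF P0 P1 S zo_obs])
  have i1: "ip d (?O (?O f)) f = ip d (?O f) (?O f)" by (rule obs_herm[OF P0 P1])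
  have "nrm d (\<lambda>i. ?O (?O f) i - f i) = nrm d (?O (?O f)) - 2 * Re (ip d (?O (?O f)) f) + nrm d f"
    by (rule nrm_diff)
  also have "\<dots> = nrm d (?O (?O f)) - nrm d f" unfolding i1 using eq by (simp add: nrm_def)
  finally have "nrm d (\<lambda>i. ?O (?O f) i - f i) \<le> 0" using c1 eq by simp
  then have "nrm d (\<lambda>i. ?O (?O f) i - f i) = 0" using nrm_nonneg by (metis antisym)
  then show ?thesis by (rule nrm_zero_eq[OF zo_obs f])
qed

lemma sos_real:
  fixes c wr wi a0r a0i a1r a1i b0r b0i b1r b1i :: real
  assumes "c * c = 1/2"
  shows "4*c*(wr^2+wi^2) - ((b0r*a0r + b0i*a0i) + (b1r*a0r + b1i*a0i) + (b0r*a1r + b0i*a1i) - (b1r*a1r + b1i*a1i)) =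
    c*((a0r - c*(b0r+b1r))^2 + (a0i - c*(b0i+b1i))^2 + ((a1r - c*(b0r - b1r))^2 + (a1i - c*(b0i - b1i))^2)) +
    c*(4*(wr^2+wi^2) - (a0r^2+a0i^2) - (a1r^2+a1i^2) - (b0r^2+b0i^2) - (b1r^2+b1i^2))"
proof -
  have h: "2 * c * c = 1" using assms by simp
  let ?B = "b0r^2+b0i^2+b1r^2+b1i^2"
  let ?X = "(b0r*a0r + b0i*a0i) + (b1r*a0r + b1i*a0i) + (b0r*a1r + b0i*a1i) - (b1r*a1r + b1i*a1i)"
  have "c*((a0r - c*(b0r+b1r))^2 + (a0i - c*(b0i+b1i))^2 + ((a1r - c*(b0r - b1r))^2 + (a1i - c*(b0i - b1i))^2)) +
    c*(4*(wr^2+wi^2) - (a0r^2+a0i^2) - (a1r^2+a1i^2) - (b0r^2+b0i^2) - (b1r^2+b1i^2)) - (4*c*(wr^2+wi^2) - ?X)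
    = (2*c*c - 1) * (c * ?B - ?X)" by (simp add: power2_eq_square algebra_simps)
  then show ?thesis using h by simp
qed

lemma sos_point:
  fixes w a0 a1 b0 b1 :: complex and c :: real
  assumes "c * c = 1/2"
  shows "4*c*(cmod w)^2 - Re (b0 * cnj a0 + b1 * cnj a0 + b0 * cnj a1 - b1 * cnj a1) =
    c*((cmod (a0 - complex_of_real c * (b0 + b1)))^2 + (cmod (a1 - complex_of_real c * (b0 - b1)))^2) +
    c*(4*(cmod w)^2 - (cmod a0)^2 - (cmod a1)^2 - (cmod b0)^2 - (cmod b1)^2)"
  using sos_real[OF assms, where wr="Re w" and wi="Im w" and a0r="Re a0" and a0i="Im a0" and a1r="Re a1" and a1i="Im a1" and b0r="Re b0" and b0i="Im b0" and b1r="Re b1" and b1i="Im b1"]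
  by (simp add: cmod_power2)

lemma sos_sum:
  fixes w a0 a1 b0 b1 :: "nat \<Rightarrow> complex" and c :: real
  assumes "c * c = 1/2"
  shows "4*c*nrm d w - Re (ip d b0 a0 + ip d b1 a0 + ip d b0 a1 - ip d b1 a1) =
    c*(nrm d (\<lambda>i. a0 i - complex_of_real c * (b0 i + b1 i)) + nrm d (\<lambda>i. a1 i - complex_of_real c * (b0 i - b1 i))) +
    c*(4*nrm d w - nrm d a0 - nrm d a1 - nrm d b0 - nrm d b1)"
proof -
  have "4*c*nrm d w - Re (ip d b0 a0 + ip d b1 a0 + ip d b0 a1 - ip d b1 a1) =
     (\<Sum>i<d. 4*c*(cmod (w i))^2 - Re (b0 i * cnj (a0 i) + b1 i * cnj (a0 i) + b0 i * cnj (a1 i) - b1 i * cnj (a1 i)))"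
    unfolding nrm_sum ip_def
    by (simp only: sum_distrib_left sum.distrib[symmetric] sum_subtractf[symmetric] Re_sum)
  also have "\<dots> = (\<Sum>i<d. c*((cmod (a0 i - complex_of_real c * (b0 i + b1 i)))^2 + (cmod (a1 i - complex_of_real c * (b0 i - b1 i)))^2) +
    c*(4*(cmod (w i))^2 - (cmod (a0 i))^2 - (cmod (a1 i))^2 - (cmod (b0 i))^2 - (cmod (b1 i))^2))"
    by (rule sum.cong[OF refl]) (rule sos_point[OF assms])
  also have "\<dots> = c*(nrm d (\<lambda>i. a0 i - complex_of_real c * (b0 i + b1 i)) + nrm d (\<lambda>i. a1 i - complex_of_real c * (b0 i - b1 i))) +
    c*(4*nrm d w - nrm d a0 - nrm d a1 - nrm d b0 - nrm d b1)"
    unfolding nrm_sum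
    by (simp only: sum_distrib_left sum.distrib[symmetric] sum_subtractf[symmetric])
  finally show ?thesis .
qed

locale chsh_ops =
  fixes d :: nat and PA QB :: "nat \<Rightarrow> nat \<Rightarrow> complex mat"
  assumes PA_psd: "\<And>x a. x < 2 \<Longrightarrow> a < 2 \<Longrightarrow> psd d (PA x a)"
    and QB_psd: "\<And>y b. y < 2 \<Longrightarrow> b < 2 \<Longrightarrow> psd d (QB y b)"
    and PA_sum: "\<And>x f i. x < 2 \<Longrightarrow> zo d f \<Longrightarrow> ap d (PA x 0) f i + ap d (PA x 1) f i = f i"
    and QB_sum: "\<And>y f i. y < 2 \<Longrightarrow> zo d f \<Longrightarrow> ap d (QB y 0) f i + ap d (QB y 1) f i = f i"
    and comm: "\<And>x a y b f. x < 2 \<Longrightarrow> a < 2 \<Longrightarrow> y < 2 \<Longrightarrow> b < 2 \<Longrightarrow>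
       ap d (PA x a) (ap d (QB y b) f) = ap d (QB y b) (ap d (PA x a) f)"
begin

abbreviation "Ao x \<equiv> obs d (PA x 0) (PA x 1)"
abbreviation "Bo y \<equiv> obs d (QB y 0) (QB y 1)"

lemma comm_AB: "x < 2 \<Longrightarrow> y < 2 \<Longrightarrow> Ao x (Bo y f) = Bo y (Ao x f)"
  unfolding obs_def ap_diff by (simp add: comm algebra_simps)

lemma PA01: "x < 2 \<Longrightarrow> psd d (PA x 0)" "x < 2 \<Longrightarrow> psd d (PA x 1)" using PA_psd by auto
lemma QB01: "y < 2 \<Longrightarrow> psd d (QB y 0)" "y < 2 \<Longrightarrow> psd d (QB y 1)" using QB_psd by auto

lemma contrA: assumes "x < 2" "zo d f" shows "nrm d (Ao x f) \<le> nrm d f"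
  by (rule obs_contr[OF PA01(1)[OF assms(1)] PA01(2)[OF assms(1)] PA_sum[OF assms(1)] assms(2)])
lemma contrB: assumes "y < 2" "zo d f" shows "nrm d (Bo y f) \<le> nrm d f"
  by (rule obs_contr[OF QB01(1)[OF assms(1)] QB01(2)[OF assms(1)] QB_sum[OF assms(1)] assms(2)])
lemma hermA: assumes "x < 2" shows "ip d (Ao x f) g = ip d f (Ao x g)"
  by (rule obs_herm[OF PA01(1)[OF assms(1)] PA01(2)[OF assms(1)]])
lemma sqA: assumes "x < 2" "zo d f" "nrm d (Ao x f) = nrm d f" shows "Ao x (Ao x f) = f"
  by (rule obs_sq[OF PA01(1)[OF assms(1)] PA01(2)[OF assms(1)] PA_sum[OF assms(1)] assms(2,3)])
lemma sqB: assumes "y < 2" "zo d f" "nrm d (Bo y f) = nrm d f" shows "Bo y (Bo y f) = f"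
  by (rule obs_sq[OF QB01(1)[OF assms(1)] QB01(2)[OF assms(1)] QB_sum[OF assms(1)] assms(2,3)])

definition chsh_val :: "(nat \<Rightarrow> complex) \<Rightarrow> real" where
  "chsh_val w = Re (ip d (Bo 0 w) (Ao 0 w) + ip d (Bo 1 w) (Ao 0 w) + ip d (Bo 0 w) (Ao 1 w) - ip d (Bo 1 w) (Ao 1 w))"

definition cc :: real where "cc = 1 / sqrt 2"

lemma cc_sq: "cc * cc = 1/2" unfolding cc_def by (simp add: power_divide flip: power2_eq_square)
lemma cc_pos: "cc > 0" unfolding cc_def by simp
lemma cc4: "4 * cc = 2 * sqrt 2"
  unfolding cc_def by (simp add: field_simps)

lemma chsh_sos: "2 * sqrt 2 * nrm d w - chsh_val w =
    cc*(nrm d (\<lambda>i. Ao 0 w i - complex_of_real cc * (Bo 0 w i + Bo 1 w i)) + nrm d (\<lambda>i. Ao 1 w i - complex_of_real cc * (Bo 0 w i - Bo 1 w i))) +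
    cc*(4*nrm d w - nrm d (Ao 0 w) - nrm d (Ao 1 w) - nrm d (Bo 0 w) - nrm d (Bo 1 w))"
  unfolding chsh_val_def cc4[symmetric] by (rule sos_sum[OF cc_sq])

lemma chsh_bound: "zo d w \<Longrightarrow> chsh_val w \<le> 2 * sqrt 2 * nrm d w"
proof -
  assume w: "zo d w"
  have "0 \<le> cc*(nrm d (\<lambda>i. Ao 0 w i - complex_of_real cc * (Bo 0 w i + Bo 1 w i)) + nrm d (\<lambda>i. Ao 1 w i - complex_of_real cc * (Bo 0 w i - Bo 1 w i))) +
    cc*(4*nrm d w - nrm d (Ao 0 w) - nrm d (Ao 1 w) - nrm d (Bo 0 w) - nrm d (Bo 1 w))"
    using cc_pos contrA[OF _ w, of 0] contrA[OF _ w, of 1] contrB[OF _ w, of 0] contrB[OF _ w, of 1]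
    by (intro add_nonneg_nonneg mult_nonneg_nonneg) (auto intro: nrm_nonneg)
  then show ?thesis using chsh_sos[of w] by simp
qed

lemma chsh_rigid:
  assumes w: "zo d w" and eq: "chsh_val w = 2 * sqrt 2 * nrm d w"
  shows "Ao 0 w = (\<lambda>i. complex_of_real cc * Bo 0 w i + complex_of_real cc * Bo 1 w i)"
    and "Ao 1 w = (\<lambda>i. complex_of_real cc * Bo 0 w i + complex_of_real (- cc) * Bo 1 w i)"
    and "nrm d (Ao 0 w) = nrm d w" "nrm d (Ao 1 w) = nrm d w"
    and "nrm d (Bo 0 w) = nrm d w" "nrm d (Bo 1 w) = nrm d w"
proof -
  let ?K0 = "nrm d (\<lambda>i. Ao 0 w i - complex_of_real cc * (Bo 0 w i + Bo 1 w i))"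
  let ?K1 = "nrm d (\<lambda>i. Ao 1 w i - complex_of_real cc * (Bo 0 w i - Bo 1 w i))"
  have a0: "nrm d (Ao 0 w) \<le> nrm d w" and a1: "nrm d (Ao 1 w) \<le> nrm d w"
    and b0: "nrm d (Bo 0 w) \<le> nrm d w" and b1: "nrm d (Bo 1 w) \<le> nrm d w"
    using contrA[OF _ w, of 0] contrA[OF _ w, of 1] contrB[OF _ w, of 0] contrB[OF _ w, of 1] by auto
  have k0: "0 \<le> ?K0" and k1: "0 \<le> ?K1" by (rule nrm_nonneg)+
  have "cc * (?K0 + ?K1) + cc * (4*nrm d w - nrm d (Ao 0 w) - nrm d (Ao 1 w) - nrm d (Bo 0 w) - nrm d (Bo 1 w)) = 0"
    using chsh_sos[of w] eq by simp
  then have "?K0 + ?K1 + (4*nrm d w - nrm d (Ao 0 w) - nrm d (Ao 1 w) - nrm d (Bo 0 w) - nrm d (Bo 1 w)) = 0"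
    using cc_pos by (simp add: distrib_left[symmetric])
  then have z: "?K0 = 0" "?K1 = 0" "nrm d (Ao 0 w) = nrm d w" "nrm d (Ao 1 w) = nrm d w"
    "nrm d (Bo 0 w) = nrm d w" "nrm d (Bo 1 w) = nrm d w"
    using k0 k1 a0 a1 b0 b1 by linarith+
  then show "nrm d (Ao 0 w) = nrm d w" "nrm d (Ao 1 w) = nrm d w"
    "nrm d (Bo 0 w) = nrm d w" "nrm d (Bo 1 w) = nrm d w" by auto
  have zz: "zo d (\<lambda>i. complex_of_real cc * (Bo 0 w i + Bo 1 w i))" "zo d (\<lambda>i. complex_of_real cc * (Bo 0 w i - Bo 1 w i))"
    using zo_obs[of d "QB 0 0" "QB 0 1" w] zo_obs[of d "QB 1 0" "QB 1 1" w] unfolding zo_def by auto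
  have "Ao 0 w = (\<lambda>i. complex_of_real cc * (Bo 0 w i + Bo 1 w i))"
    by (rule nrm_zero_eq[OF zo_obs zz(1) z(1)])
  then show "Ao 0 w = (\<lambda>i. complex_of_real cc * Bo 0 w i + complex_of_real cc * Bo 1 w i)"
    by (simp add: distrib_left)
  have "Ao 1 w = (\<lambda>i. complex_of_real cc * (Bo 0 w i - Bo 1 w i))"
    by (rule nrm_zero_eq[OF zo_obs zz(2) z(2)])
  then show "Ao 1 w = (\<lambda>i. complex_of_real cc * Bo 0 w i + complex_of_real (- cc) * Bo 1 w i)"
    by (simp add: algebra_simps)
qed

end

context chsh_ops
begin

lemma anticomm:
  assumes w: "zo d w" and eq: "chsh_val w = 2 * sqrt 2 * nrm d w"
  shows "Ao 0 (Ao 1 w) i + Ao 1 (Ao 0 w) i = 0"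
proof -
  note R = chsh_rigid[OF w eq]
  have S0: "Bo 0 (Bo 0 w) = w" by (rule sqB[OF _ w R(5)]) simp
  have S1: "Bo 1 (Bo 1 w) = w" by (rule sqB[OF _ w R(6)]) simp
  have C: "\<And>x y f. x < 2 \<Longrightarrow> y < 2 \<Longrightarrow> Ao x (Bo y f) = Bo y (Ao x f)" by (rule comm_AB)
  have C00: "Ao 0 (Bo 0 w) = Bo 0 (Ao 0 w)" by (rule comm_AB) simp_all
  have C01: "Ao 0 (Bo 1 w) = Bo 1 (Ao 0 w)" by (rule comm_AB) simp_all
  have C10: "Ao 1 (Bo 0 w) = Bo 0 (Ao 1 w)" by (rule comm_AB) simp_all
  have C11: "Ao 1 (Bo 1 w) = Bo 1 (Ao 1 w)" by (rule comm_AB) simp_all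
  show ?thesis
    unfolding R(1) R(2) obs_lin C00 C01 C10 C11
    unfolding R(1)[symmetric] R(2)[symmetric]
    unfolding R(1) R(2) obs_lin S0 S1
    by (simp add: algebra_simps)
qed

lemma E_bound:
  assumes w: "zo d w" and eq: "chsh_val w = 2 * sqrt 2 * nrm d w"
    and E: "psd d E"
    and commE: "\<And>x a f. x < 2 \<Longrightarrow> a < 2 \<Longrightarrow> ap d E (ap d (PA x a) f) = ap d (PA x a) (ap d E f)"
    and ab: "\<alpha>^2 + \<beta>^2 = 1"
  shows "cmod (complex_of_real \<alpha> * ip d (ap d E (Ao 0 w)) w + complex_of_real \<beta> * ip d (ap d E (Ao 1 w)) w) \<le> Re (qf d E w)"
proof -
  note R = chsh_rigid[OF w eq]
  have SA0: "Ao 0 (Ao 0 w) = w" by (rule sqA[OF _ w R(3)]) simp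
  have SA1: "Ao 1 (Ao 1 w) = w" by (rule sqA[OF _ w R(4)]) simp
  have AC: "\<And>i. Ao 0 (Ao 1 w) i + Ao 1 (Ao 0 w) i = 0" by (rule anticomm[OF w eq])
  have CE: "\<And>x f. x < 2 \<Longrightarrow> Ao x (ap d E f) = ap d E (Ao x f)"
    unfolding obs_def ap_diff by (simp add: commE)
  define a where "a = complex_of_real \<alpha>"
  define b where "b = complex_of_real \<beta>"
  define m where "m = (\<lambda>i. a * Ao 0 w i + b * Ao 1 w i)"
  have lhs: "complex_of_real \<alpha> * ip d (ap d E (Ao 0 w)) w + complex_of_real \<beta> * ip d (ap d E (Ao 1 w)) w = ip d (ap d E m) w"
    unfolding m_def ap_lin ip_linL a_def b_def ..
  have Am: "(\<lambda>i. a * Ao 0 m i + b * Ao 1 m i) = w"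
  proof (rule ext)
    fix i
    have "a * Ao 0 m i + b * Ao 1 m i = (a*a) * w i + (b*b) * w i + (a*b) * (Ao 0 (Ao 1 w) i + Ao 1 (Ao 0 w) i)"
      unfolding m_def obs_lin SA0 SA1 by (simp add: algebra_simps)
    also have "\<dots> = (a*a + b*b) * w i" using AC by (simp add: algebra_simps)
    also have "a*a + b*b = 1" unfolding a_def b_def using ab by (simp add: power2_eq_square flip: of_real_mult of_real_add)
    finally show "a * Ao 0 m i + b * Ao 1 m i = w i" by simp
  qed
  have "qf d E m = ip d (ap d E m) m" unfolding qf_def ..
  also have "\<dots> = cnj a * ip d (ap d E m) (Ao 0 w) + cnj b * ip d (ap d E m) (Ao 1 w)"
    by (subst (2) m_def) (rule ip_linR)
  also have "\<dots> = a * ip d (Ao 0 (ap d E m)) w + b * ip d (Ao 1 (ap d E m)) w"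
    unfolding a_def b_def using hermA[of 0 "ap d E m" w] hermA[of 1 "ap d E m" w] by simp
  also have "\<dots> = ip d (ap d E (\<lambda>i. a * Ao 0 m i + b * Ao 1 m i)) w"
  proof -
    have CE0: "Ao 0 (ap d E m) = ap d E (Ao 0 m)" by (rule CE) simp
    have CE1: "Ao 1 (ap d E m) = ap d E (Ao 1 m)" by (rule CE) simp
    show ?thesis unfolding CE0 CE1 ap_lin ip_linL ..
  qed
  also have "\<dots> = qf d E w" unfolding Am qf_def ..
  finally have qm: "qf d E m = qf d E w" .
  have "(cmod (ip d (ap d E m) w))^2 \<le> Re (qf d E m) * Re (qf d E w)" by (rule psd_CS[OF E])
  also have "\<dots> = (Re (qf d E w))^2" unfolding qm by (simp add: power2_eq_square)
  finally have "(cmod (ip d (ap d E m) w))^2 \<le> (Re (qf d E w))^2" .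
  then have "cmod (ip d (ap d E m) w) \<le> Re (qf d E w)"
    using psd_nonneg[OF E, of w] by (rule power2_le_imp_le)
  then show ?thesis unfolding lhs .
qed

end

lemma theta_sin_ne:
  assumes "y1 < n" "y2 < n" "y1 \<noteq> y2"
  shows "sin (theta n y1 - theta n y2) \<noteq> 0"
proof
  assume "sin (theta n y1 - theta n y2) = 0"
  then obtain k :: int where k: "theta n y1 - theta n y2 = real_of_int k * pi"
    by (auto simp: sin_zero_iff_int2)
  have n0: "real n > 0" using assms by simp
  have "(real y1 - real y2) * pi / real n = real_of_int k * pi"
  proof -
    have "(real y1 - real y2) * pi / real n = theta n y1 - theta n y2"
      unfolding theta_def by (simp add: diff_divide_distrib left_diff_distrib)
    then show ?thesis using k by simp
  qed
  then have "(real y1 - real y2) * pi = real_of_int k * pi * real n" using n0 by (simp add: divide_eq_eq)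
  then have "(real y1 - real y2) * pi = (real_of_int k * real n) * pi" by (simp add: mult.commute mult.left_commute)
  then have e: "real y1 - real y2 = real_of_int k * real n" by simp
  have "\<bar>real y1 - real y2\<bar> < real n" using assms by linarith
  then have "\<bar>real_of_int k\<bar> * real n < 1 * real n" unfolding e by (simp add: abs_mult)
  then have "\<bar>real_of_int k\<bar> < 1" using n0 by (simp only: mult_less_cancel_right)
  then have "k = 0" by linarith
  then show False using e assms by simp
qed

lemma two_dirs:
  assumes "y1 < n" "y2 < n" "y1 \<noteq> y2"
    and h1: "r0 * sin (theta n y1) = r1 * cos (theta n y1)"
    and h2: "r0 * sin (theta n y2) = r1 * cos (theta n y2)"
  shows "r0 = 0 \<and> r1 = 0"
proof -
  let ?s1 = "sin (theta n y1)" and ?c1 = "cos (theta n y1)" and ?s2 = "sin (theta n y2)" and ?c2 = "cos (theta n y2)"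
  have S: "sin (theta n y1 - theta n y2) = ?s1 * ?c2 - ?c1 * ?s2" by (rule sin_diff)
  have "r0 * (?s1 * ?c2 - ?c1 * ?s2) = (r0 * ?s1) * ?c2 - ?c1 * (r0 * ?s2)" by (simp add: algebra_simps)
  also have "\<dots> = 0" unfolding h1 h2 by (simp add: algebra_simps)
  finally have a: "r0 * sin (theta n y1 - theta n y2) = 0" unfolding S .
  have "r1 * (?s1 * ?c2 - ?c1 * ?s2) = ?s1 * (r1 * ?c2) - ?s2 * (r1 * ?c1)" by (simp add: algebra_simps)
  also have "\<dots> = 0" unfolding h1[symmetric] h2[symmetric] by (simp add: algebra_simps)
  finally have b: "r1 * sin (theta n y1 - theta n y2) = 0" unfolding S .
  show ?thesis using a b theta_sin_ne[OF assms(1-3)] by simp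
qed

lemma full_dir:
  fixes r0 r1 q g s c :: real
  assumes bound: "\<And>\<alpha> \<beta>. \<alpha>^2 + \<beta>^2 = 1 \<Longrightarrow> \<bar>\<alpha> * r0 + \<beta> * r1\<bar> \<le> q"
    and g: "g = c * r0 + s * r1" and sc: "s^2 + c^2 = 1" and gq: "\<bar>g\<bar> = q" and q: "q > 0"
  shows "r0 * s = r1 * c"
proof -
  define \<rho> where "\<rho> = sqrt (r0^2 + r1^2)"
  have rr: "\<rho>^2 = r0^2 + r1^2" unfolding \<rho>_def by simp
  have lag: "g^2 + (r0 * s - r1 * c)^2 = \<rho>^2"
  proof -
    have "g^2 + (r0 * s - r1 * c)^2 = (r0^2 + r1^2) * (s^2 + c^2)" unfolding g by (simp add: power2_eq_square algebra_simps)
    then show ?thesis using sc rr by simp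
  qed
  have "\<rho> \<le> q"
  proof (cases "\<rho> = 0")
    case True then show ?thesis using q by simp
  next
    case False
    have "\<rho> \<ge> 0" unfolding \<rho>_def by simp
    then have rp: "\<rho> > 0" using False by linarith
    have "\<rho>^2 > 0" using rp by simp
    then have nz: "r0^2 + r1^2 > 0" using rr by simp
    have "(r0/\<rho>)^2 + (r1/\<rho>)^2 = (r0^2 + r1^2) / \<rho>^2" by (simp add: power_divide add_divide_distrib)
    also have "\<dots> = 1" unfolding rr by (rule divide_self) (use nz in linarith)
    finally have "(r0/\<rho>)^2 + (r1/\<rho>)^2 = 1" .
    then have "\<bar>(r0/\<rho>) * r0 + (r1/\<rho>) * r1\<bar> \<le> q" by (rule bound)
    also have "(r0/\<rho>) * r0 + (r1/\<rho>) * r1 = \<rho>" using rr rp by (simp add: power2_eq_square field_simps)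
    finally show ?thesis using rp by simp
  qed
  moreover have "0 \<le> \<rho>" unfolding \<rho>_def by simp
  ultimately have "\<rho>^2 \<le> q^2" by (intro power_mono)
  moreover have "g^2 = q^2" using gq by (metis power2_abs)
  ultimately have "(r0 * s - r1 * c)^2 \<le> 0" using lag by linarith
  then show ?thesis by simp
qed

lemma final_real:
  fixes t c :: "nat \<Rightarrow> nat \<Rightarrow> real" and q r0 r1 :: "nat \<Rightarrow> real" and L :: "nat set"
  assumes fin: "finite L"
    and t: "\<And>y l. y < n \<Longrightarrow> l \<in> L \<Longrightarrow> 0 \<le> t y l \<and> t y l \<le> 1"
    and c: "\<And>y l. y < n \<Longrightarrow> l \<in> L \<Longrightarrow> \<bar>c y l\<bar> \<le> t y l"
    and q: "\<And>l. l \<in> L \<Longrightarrow> 0 \<le> q l" and qs: "(\<Sum>l\<in>L. q l) = 1"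
    and bound: "\<And>l \<alpha> \<beta>. l \<in> L \<Longrightarrow> \<alpha>^2 + \<beta>^2 = 1 \<Longrightarrow> \<bar>\<alpha> * r0 l + \<beta> * r1 l\<bar> \<le> q l"
    and eq: "(\<Sum>y<n. \<Sum>l\<in>L. c y l * (cos (theta n y) * r0 l + sin (theta n y) * r1 l)) = (\<Sum>y<n. \<Sum>l\<in>L. t y l * q l)"
  shows "(\<Sum>y<n. \<Sum>l\<in>L. t y l * q l) \<le> 1"
proof -
  define g where "g y l = cos (theta n y) * r0 l + sin (theta n y) * r1 l" for y l
  have sc: "\<And>x::real. (sin x)^2 + (cos x)^2 = 1" by simp
  have gq: "\<bar>g y l\<bar> \<le> q l" if "l \<in> L" for y l
    unfolding g_def by (rule bound[OF that]) (simp add: add.commute)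
  have le: "c y l * g y l \<le> t y l * q l" if "y < n" "l \<in> L" for y l
  proof -
    have "c y l * g y l \<le> \<bar>c y l\<bar> * \<bar>g y l\<bar>" by (simp add: abs_mult[symmetric])
    also have "\<dots> \<le> t y l * q l" using c[OF that] gq[OF that(2)] by (intro mult_mono) auto
    finally show ?thesis .
  qed
  have zero: "(\<Sum>y<n. \<Sum>l\<in>L. t y l * q l - c y l * g y l) = 0"
    using eq unfolding g_def by (simp add: sum_subtractf)
  have nn: "\<And>y. y \<in> {..<n} \<Longrightarrow> 0 \<le> (\<Sum>l\<in>L. t y l * q l - c y l * g y l)"
    using le by (intro sum_nonneg) auto
  have each: "t y l * q l = c y l * g y l" if "y < n" "l \<in> L" for y l
  proof -
    have "(\<Sum>l\<in>L. t y l * q l - c y l * g y l) = 0"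
      using zero nn sum_nonneg_eq_0_iff[of "{..<n}" "\<lambda>y. \<Sum>l\<in>L. t y l * q l - c y l * g y l"] that by auto
    then show ?thesis using sum_nonneg_eq_0_iff[OF fin, of "\<lambda>l. t y l * q l - c y l * g y l"] le[OF that(1)] that by auto
  qed
  have per_l: "(\<Sum>y<n. t y l) * q l \<le> q l" if l: "l \<in> L" for l
  proof (cases "q l = 0")
    case True then show ?thesis by simp
  next
    case False
    then have qp: "q l > 0" using q[OF l] by simp
    have gfull: "\<bar>g y l\<bar> = q l" if y: "y < n" "t y l > 0" for y
    proof -
      have "t y l * q l = c y l * g y l" by (rule each[OF y(1) l])
      also have "\<dots> \<le> \<bar>c y l\<bar> * \<bar>g y l\<bar>" by (simp add: abs_mult[symmetric])
      also have "\<dots> \<le> t y l * \<bar>g y l\<bar>" using c[OF y(1) l] by (intro mult_right_mono) auto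
      finally have "q l \<le> \<bar>g y l\<bar>" using y(2) by simp
      then show ?thesis using gq[OF l, of y] by simp
    qed
    have dir: "r0 l * sin (theta n y) = r1 l * cos (theta n y)" if y: "y < n" "t y l > 0" for y
    proof -
      have G: "\<bar>cos (theta n y) * r0 l + sin (theta n y) * r1 l\<bar> = q l" using gfull[OF y] unfolding g_def .
      show ?thesis by (rule full_dir[OF bound[OF l] refl sin_cos_squared_add G qp])
    qed
    have uniq: "y1 = y2" if "y1 < n" "y2 < n" "t y1 l > 0" "t y2 l > 0" for y1 y2
    proof (rule ccontr)
      assume "y1 \<noteq> y2"
      then have "r0 l = 0 \<and> r1 l = 0" using two_dirs[OF that(1,2)] dir[OF that(1,3)] dir[OF that(2,4)] by blast
      then have "g y1 l = 0" unfolding g_def by simp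
      then show False using gfull[OF that(1,3)] qp by simp
    qed
    have "(\<Sum>y<n. t y l) \<le> 1"
    proof (cases "\<exists>y0<n. t y0 l > 0")
      case True
      then obtain y0 where y0: "y0 < n" "t y0 l > 0" by blast
      have "(\<Sum>y<n. t y l) = (\<Sum>y<n. if y = y0 then t y0 l else 0)"
      proof (rule sum.cong[OF refl])
        fix y assume "y \<in> {..<n}"
        then have y: "y < n" by simp
        show "t y l = (if y = y0 then t y0 l else 0)"
        proof (cases "y = y0")
          case False
          then have "\<not> t y l > 0" using uniq[OF y y0(1) _ y0(2)] by blast
          then show ?thesis using t[OF y l] False by simp
        qed simp
      qed
      also have "\<dots> = t y0 l" using y0 by simp
      also have "\<dots> \<le> 1" using t[OF y0(1) l] by simp
      finally show ?thesis .
    next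
      case False
      have "\<forall>y<n. t y l = 0"
      proof (intro allI impI)
        fix y assume y: "y < n"
        then have "\<not> t y l > 0" using False by blast
        then show "t y l = 0" using t[OF y l] by simp
      qed
      then show ?thesis by simp
    qed
    then show ?thesis using qp by simp
  qed
  have "(\<Sum>y<n. \<Sum>l\<in>L. t y l * q l) = (\<Sum>l\<in>L. (\<Sum>y<n. t y l) * q l)"
    by (subst sum.swap) (simp add: sum_distrib_right)
  also have "\<dots> \<le> (\<Sum>l\<in>L. q l)" by (intro sum_mono per_l)
  finally show ?thesis using qs by simp
qed

lemma ap_one: assumes "zo d f" shows "ap d (1\<^sub>m d) f = f"
proof (rule ext)
  fix i show "ap d (1\<^sub>m d) f i = f i"
  proof (cases "i < d")
    case True
    have "ap d (1\<^sub>m d) f i = (\<Sum>j<d. if i = j then f j else 0)"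
      unfolding ap_in[OF True] using True by (intro sum.cong refl) simp
    also have "\<dots> = f i" using True by simp
    finally show ?thesis .
  next
    case False then show ?thesis using assms by (simp add: ap_def zo_def)
  qed
qed

lemma ip_sumL: "ip d (\<lambda>i. \<Sum>l\<in>L. u l i) g = (\<Sum>l\<in>L. ip d (u l) g)"
  unfolding ip_def sum_distrib_right by (rule sum.swap)

lemma povm_psd: "povm n Outs E \<Longrightarrow> b \<in> Outs \<Longrightarrow> psd n (E b)"
  unfolding povm_def by blast

lemma povm_sum: "povm n Outs E \<Longrightarrow> \<forall>i<n. \<forall>j<n. (\<Sum>b\<in>Outs. E b $$ (i,j)) = (if i = j then 1 else 0)"
  unfolding povm_def by auto

lemma setup_srq:
  assumes srq: "SRQ n pS pL"
  shows "\<exists>(dA::nat) (dB::nat) \<rho> (A :: nat \<Rightarrow> nat \<Rightarrow> complex mat) (BS :: nat \<Rightarrow> nat \<Rightarrow> complex mat)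
        (E :: nat \<Rightarrow> complex mat) (\<Lambda> :: nat set) (pb :: nat option \<Rightarrow> nat \<Rightarrow> nat \<Rightarrow> real).
        density_op (dA * dB) \<rho> \<and>
        (\<forall>x<2. povm dA {0, 1} (A x)) \<and>
        (\<forall>y<2. povm dB {0, 1} (BS y)) \<and>
        finite \<Lambda> \<and> povm dB \<Lambda> E \<and>
        (\<forall>y<n. \<forall>l\<in>\<Lambda>. (\<forall>b\<in>outL. pb b y l \<ge> 0) \<and> (\<Sum>b\<in>outL. pb b y l) = 1) \<and>
        (\<forall>a<2. \<forall>b<2. \<forall>x<2. \<forall>y<2.
           complex_of_real (pS a b x y) = mtrace (\<rho> * kron (A x a) (BS y b))) \<and>
        (\<forall>a<2. \<forall>b\<in>outL. \<forall>x<2. \<forall>y<n.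
           complex_of_real (pL a b x y) =
             (\<Sum>l\<in>\<Lambda>. complex_of_real (pb b y l) * mtrace (\<rho> * kron (A x a) (E l))))"
  using srq unfolding SRQ_def .

lemma part4:
  assumes n: "n \<ge> 1" and eta: "\<eta> > 1 / real n" and srq: "SRQ n pQS (pQL \<eta> n)"
  shows False
proof -
  from setup_srq[OF srq] obtain dA dB :: nat and \<rho> :: "complex mat"
    and A BS :: "nat \<Rightarrow> nat \<Rightarrow> complex mat" and E :: "nat \<Rightarrow> complex mat"
    and \<Lambda> :: "nat set" and pb :: "nat option \<Rightarrow> nat \<Rightarrow> nat \<Rightarrow> real" where H:
       "density_op (dA * dB) \<rho> \<and>
        (\<forall>x<2. povm dA {0, 1} (A x)) \<and>
        (\<forall>y<2. povm dB {0, 1} (BS y)) \<and>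
        finite \<Lambda> \<and> povm dB \<Lambda> E \<and>
        (\<forall>y<n. \<forall>l\<in>\<Lambda>. (\<forall>b\<in>outL. pb b y l \<ge> 0) \<and> (\<Sum>b\<in>outL. pb b y l) = 1) \<and>
        (\<forall>a<2. \<forall>b<2. \<forall>x<2. \<forall>y<2.
           complex_of_real (pQS a b x y) = mtrace (\<rho> * kron (A x a) (BS y b))) \<and>
        (\<forall>a<2. \<forall>b\<in>outL. \<forall>x<2. \<forall>y<n.
           complex_of_real (pQL \<eta> n a b x y) =
             (\<Sum>l\<in>\<Lambda>. complex_of_real (pb b y l) * mtrace (\<rho> * kron (A x a) (E l))))"
    by (elim exE) (erule that)
  then have rho: "density_op (dA * dB) \<rho>" and Apov: "\<And>x. x < 2 \<Longrightarrow> povm dA {0, 1} (A x)"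
    and Bpov: "\<And>y. y < 2 \<Longrightarrow> povm dB {0, 1} (BS y)" and finL: "finite \<Lambda>" and Epov: "povm dB \<Lambda> E"
    and pbp: "\<And>y l. y < n \<Longrightarrow> l \<in> \<Lambda> \<Longrightarrow> (\<forall>b\<in>outL. pb b y l \<ge> 0) \<and> (\<Sum>b\<in>outL. pb b y l) = 1"
    and pS: "\<And>a b x y. a < 2 \<Longrightarrow> b < 2 \<Longrightarrow> x < 2 \<Longrightarrow> y < 2 \<Longrightarrow>
           complex_of_real (pQS a b x y) = mtrace (\<rho> * kron (A x a) (BS y b))"
    and pL: "\<And>a b x y. a < 2 \<Longrightarrow> b \<in> outL \<Longrightarrow> x < 2 \<Longrightarrow> y < n \<Longrightarrow>
           complex_of_real (pQL \<eta> n a b x y) =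
             (\<Sum>l\<in>\<Lambda>. complex_of_real (pb b y l) * mtrace (\<rho> * kron (A x a) (E l)))"
    by blast+
  have L2: "(0::nat) < 2" "(1::nat) < 2" by simp_all
  define d where "d = dA * dB"
  have psdr: "psd d \<rho>" and tr1: "mtrace \<rho> = 1" using rho unfolding density_op_def d_def by auto
  have rhoC: "\<rho> \<in> carrier_mat d d" using psdr psd_iff by blast
  have d0: "d > 0"
  proof (rule ccontr)
    assume "\<not> d > 0"
    then have "d = 0" by simp
    then have "mtrace \<rho> = 0" using rhoC unfolding mtrace_def by simp
    then show False using tr1 by simp
  qed
  have dB0: "dB > 0" using d0 unfolding d_def by simp
  obtain N :: nat and w0 where dec0: "\<forall>i<d. \<forall>j<d. \<rho>$$(i,j) = (\<Sum>k<N. w0 k i * cnj (w0 k j))"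
    using psd_decomp[OF psdr] by blast
  define w where "w k = (\<lambda>i. if i < d then w0 k i else 0)" for k
  have zw: "\<And>k. zo d (w k)" unfolding w_def zo_def by simp
  have dec: "\<forall>i<d. \<forall>j<d. \<rho>$$(i,j) = (\<Sum>k<N. w k i * cnj (w k j))" using dec0 unfolding w_def by simp
  have tr: "\<And>X. X \<in> carrier_mat d d \<Longrightarrow> mtrace (\<rho> * X) = (\<Sum>k<N. qf d X (w k))"
    by (rule trace_decomp[OF rhoC _ dec])
  have Apsd: "psd dA (A x a)" if "x < 2" "a < 2" for x a
  proof -
    have "a \<in> {0,1}" using that by auto
    then show ?thesis by (rule povm_psd[OF Apov[OF that(1)]])
  qed
  have Bpsd: "psd dB (BS y b)" if "y < 2" "b < 2" for y b
  proof -
    have "b \<in> {0,1}" using that by auto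
    then show ?thesis by (rule povm_psd[OF Bpov[OF that(1)]])
  qed
  have Epsd: "\<And>l. l \<in> \<Lambda> \<Longrightarrow> psd dB (E l)" by (rule povm_psd[OF Epov])
  have AC: "\<And>x a. x < 2 \<Longrightarrow> a < 2 \<Longrightarrow> A x a \<in> carrier_mat dA dA" using Apsd psd_iff by blast
  have BC: "\<And>y b. y < 2 \<Longrightarrow> b < 2 \<Longrightarrow> BS y b \<in> carrier_mat dB dB" using Bpsd psd_iff by blast
  have EC: "\<And>l. l \<in> \<Lambda> \<Longrightarrow> E l \<in> carrier_mat dB dB" using Epsd psd_iff by blast
  define PA where "PA x a = kron (A x a) (1\<^sub>m dB)" for x a
  define QB where "QB y b = kron (1\<^sub>m dA) (BS y b)" for y b
  define EE where "EE l = kron (1\<^sub>m dA) (E l)" for l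
  have PAC: "\<And>x a. x < 2 \<Longrightarrow> a < 2 \<Longrightarrow> PA x a \<in> carrier_mat d d" unfolding PA_def d_def using AC by (simp add: kron_carrier)
  have QBC: "\<And>y b. y < 2 \<Longrightarrow> b < 2 \<Longrightarrow> QB y b \<in> carrier_mat d d" unfolding QB_def d_def using BC by (simp add: kron_carrier)
  have EEC: "\<And>l. l \<in> \<Lambda> \<Longrightarrow> EE l \<in> carrier_mat d d" unfolding EE_def d_def using EC by (simp add: kron_carrier)
  have PApsd: "\<And>x a. x < 2 \<Longrightarrow> a < 2 \<Longrightarrow> psd d (PA x a)" unfolding PA_def d_def using Apsd by (simp add: psd_kron_left)
  have QBpsd: "\<And>y b. y < 2 \<Longrightarrow> b < 2 \<Longrightarrow> psd d (QB y b)" unfolding QB_def d_def using Bpsd by (simp add: psd_kron_right)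
  have EEpsd: "\<And>l. l \<in> \<Lambda> \<Longrightarrow> psd d (EE l)" unfolding EE_def d_def using Epsd by (simp add: psd_kron_right)
  have PAsum: "ap d (PA x 0) f i + ap d (PA x 1) f i = f i" if "x < 2" "zo d f" for x f i
  proof -
    have "(\<Sum>a\<in>{0::nat,1}. ap d (PA x a) f i) = f i"
    proof (rule ap_sum_id[OF _ _ that(2)])
      show "\<forall>i<d. \<forall>j<d. (\<Sum>a\<in>{0::nat,1}. PA x a $$ (i,j)) = (if i = j then 1 else 0)"
        unfolding PA_def d_def
        using kron_sum_left[of "{0::nat,1}" "A x" dA, OF _ _ povm_sum[OF Apov[OF that(1)]]] AC[OF that(1)] by auto
    qed simp
    then show ?thesis by simp
  qed
  have QBsum: "ap d (QB y 0) f i + ap d (QB y 1) f i = f i" if "y < 2" "zo d f" for y f i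
  proof -
    have "(\<Sum>b\<in>{0::nat,1}. ap d (QB y b) f i) = f i"
    proof (rule ap_sum_id[OF _ _ that(2)])
      show "\<forall>i<d. \<forall>j<d. (\<Sum>b\<in>{0::nat,1}. QB y b $$ (i,j)) = (if i = j then 1 else 0)"
        unfolding QB_def d_def
        using kron_sum_right[of "{0::nat,1}" "BS y" dB, OF _ _ povm_sum[OF Bpov[OF that(1)]]] BC[OF that(1)] by auto
    qed simp
    then show ?thesis by simp
  qed
  have PQ: "ap d (PA x a) (ap d (QB y b) f) = ap d (kron (A x a) (BS y b)) f"
    and QP: "ap d (QB y b) (ap d (PA x a) f) = ap d (kron (A x a) (BS y b)) f"
    if "x < 2" "a < 2" "y < 2" "b < 2" for x a y b f
  proof -
    have "PA x a * QB y b = kron (A x a) (BS y b)" unfolding PA_def QB_def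
      by (rule kron_mixed1[OF AC[OF that(1,2)] BC[OF that(3,4)]])
    then show "ap d (PA x a) (ap d (QB y b) f) = ap d (kron (A x a) (BS y b)) f"
      using ap_mult[OF PAC[OF that(1,2)] QBC[OF that(3,4)], of f] by simp
    have "QB y b * PA x a = kron (A x a) (BS y b)" unfolding PA_def QB_def
      by (rule kron_mixed2[OF AC[OF that(1,2)] BC[OF that(3,4)]])
    then show "ap d (QB y b) (ap d (PA x a) f) = ap d (kron (A x a) (BS y b)) f"
      using ap_mult[OF QBC[OF that(3,4)] PAC[OF that(1,2)], of f] by simp
  qed
  interpret C: chsh_ops d PA QB
  proof
    show "\<And>x a. x < 2 \<Longrightarrow> a < 2 \<Longrightarrow> psd d (PA x a)" by (rule PApsd)
    show "\<And>y b. y < 2 \<Longrightarrow> b < 2 \<Longrightarrow> psd d (QB y b)" by (rule QBpsd)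
    show "\<And>x f i. x < 2 \<Longrightarrow> zo d f \<Longrightarrow> ap d (PA x 0) f i + ap d (PA x 1) f i = f i" by (rule PAsum)
    show "\<And>y f i. y < 2 \<Longrightarrow> zo d f \<Longrightarrow> ap d (QB y 0) f i + ap d (QB y 1) f i = f i" by (rule QBsum)
    show "\<And>x a y b f. x < 2 \<Longrightarrow> a < 2 \<Longrightarrow> y < 2 \<Longrightarrow> b < 2 \<Longrightarrow>
       ap d (PA x a) (ap d (QB y b) f) = ap d (QB y b) (ap d (PA x a) f)" using PQ QP by simp
  qed
  have kronAB: "kron (A x a) (BS y b) \<in> carrier_mat d d" if "x < 2" "a < 2" "y < 2" "b < 2" for x a y b
    unfolding d_def using AC[OF that(1,2)] BC[OF that(3,4)] by (rule kron_carrier)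
  have qfAB: "qf d (kron (A x a) (BS y b)) (w k) = ip d (ap d (QB y b) (w k)) (ap d (PA x a) (w k))"
    if "x < 2" "a < 2" "y < 2" "b < 2" for x a y b k
  proof -
    have "qf d (kron (A x a) (BS y b)) (w k) = ip d (ap d (PA x a) (ap d (QB y b) (w k))) (w k)"
      unfolding qf_def PQ[OF that] ..
    also have "\<dots> = ip d (ap d (QB y b) (w k)) (ap d (PA x a) (w k))"
      by (rule herm_ip[OF psd_herm[OF PApsd[OF that(1,2)]]])
    finally show ?thesis .
  qed
  have pSk: "complex_of_real (pQS a b x y) = (\<Sum>k<N. ip d (ap d (QB y b) (w k)) (ap d (PA x a) (w k)))"
    if "x < 2" "a < 2" "y < 2" "b < 2" for x a y b
    using pS[OF that(2,4,1,3)] tr[OF kronAB[OF that]] qfAB[OF that] by simp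
  have corrS_eq: "complex_of_real (corrS pQS x y) = (\<Sum>k<N. ip d (C.Bo y (w k)) (C.Ao x (w k)))"
    if "x < 2" "y < 2" for x y
  proof -
    have "complex_of_real (corrS pQS x y) = complex_of_real (pQS 0 0 x y) - complex_of_real (pQS 0 1 x y)
        - complex_of_real (pQS 1 0 x y) + complex_of_real (pQS 1 1 x y)"
      unfolding corrS_def sum2 by simp
    also have "\<dots> = (\<Sum>k<N. ip d (ap d (QB y 0) (w k)) (ap d (PA x 0) (w k)))
        - (\<Sum>k<N. ip d (ap d (QB y 1) (w k)) (ap d (PA x 0) (w k)))
        - (\<Sum>k<N. ip d (ap d (QB y 0) (w k)) (ap d (PA x 1) (w k)))
        + (\<Sum>k<N. ip d (ap d (QB y 1) (w k)) (ap d (PA x 1) (w k)))"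
      using pSk[of x 0 y 0] pSk[of x 0 y 1] pSk[of x 1 y 0] pSk[of x 1 y 1] that by simp
    also have "\<dots> = (\<Sum>k<N. ip d (C.Bo y (w k)) (C.Ao x (w k)))"
      unfolding obs_def ip_diffL ip_diffR
      by (simp add: sum_subtractf sum.distrib algebra_simps)
    finally show ?thesis .
  qed
  have CHSHeq: "2 * sqrt 2 = (\<Sum>k<N. C.chsh_val (w k))"
  proof -
    have "complex_of_real (CHSH pQS) = complex_of_real (corrS pQS 0 0) + complex_of_real (corrS pQS 0 1)
        + complex_of_real (corrS pQS 1 0) - complex_of_real (corrS pQS 1 1)"
      unfolding CHSH_def sum2 by simp
    also have "\<dots> = (\<Sum>k<N. ip d (C.Bo 0 (w k)) (C.Ao 0 (w k)) + ip d (C.Bo 1 (w k)) (C.Ao 0 (w k))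
        + ip d (C.Bo 0 (w k)) (C.Ao 1 (w k)) - ip d (C.Bo 1 (w k)) (C.Ao 1 (w k)))"
      using corrS_eq[of 0 0] corrS_eq[of 0 1] corrS_eq[of 1 0] corrS_eq[of 1 1]
      by (simp add: sum_subtractf sum.distrib)
    finally have "CHSH pQS = Re (\<Sum>k<N. ip d (C.Bo 0 (w k)) (C.Ao 0 (w k)) + ip d (C.Bo 1 (w k)) (C.Ao 0 (w k))
        + ip d (C.Bo 0 (w k)) (C.Ao 1 (w k)) - ip d (C.Bo 1 (w k)) (C.Ao 1 (w k)))"
      by (metis Re_complex_of_real)
    also have "\<dots> = (\<Sum>k<N. C.chsh_val (w k))" unfolding Re_sum C.chsh_val_def ..
    finally show ?thesis using part1 by simp
  qed
  have nrm1: "(\<Sum>k<N. nrm d (w k)) = 1"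
  proof -
    have "\<rho> * 1\<^sub>m d = \<rho>" using rhoC by simp
    then have "1 = mtrace (\<rho> * 1\<^sub>m d)" using tr1 by simp
    also have "\<dots> = (\<Sum>k<N. qf d (1\<^sub>m d) (w k))" by (rule tr) simp
    also have "\<dots> = (\<Sum>k<N. complex_of_real (nrm d (w k)))"
      unfolding qf_def ap_one[OF zw] ip_self ..
    finally show ?thesis by (metis of_real_eq_1_iff of_real_sum)
  qed
  have rigid: "C.chsh_val (w k) = 2 * sqrt 2 * nrm d (w k)" if "k < N" for k
  proof -
    define F where "F k = 2 * sqrt 2 * nrm d (w k) - C.chsh_val (w k)" for k
    have "(\<Sum>k<N. F k) = 2 * sqrt 2 * (\<Sum>k<N. nrm d (w k)) - (\<Sum>k<N. C.chsh_val (w k))"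
      unfolding F_def by (simp add: sum_subtractf sum_distrib_left)
    also have "\<dots> = 0" using nrm1 CHSHeq by simp
    finally have s0: "(\<Sum>k<N. F k) = 0" .
    have nn: "\<And>k. k \<in> {..<N} \<Longrightarrow> 0 \<le> F k"
      unfolding F_def using C.chsh_bound[OF zw] by simp
    have "\<forall>x\<in>{..<N}. F x = 0" using sum_nonneg_eq_0_iff[of "{..<N}" F] nn s0 by simp
    then have "F k = 0" using that by simp
    then show ?thesis unfolding F_def by simp
  qed
  have kronAE: "kron (A x a) (E l) \<in> carrier_mat d d" if "x < 2" "a < 2" "l \<in> \<Lambda>" for x a l
    unfolding d_def using AC[OF that(1,2)] EC[OF that(3)] by (rule kron_carrier)
  have EP: "ap d (EE l) (ap d (PA x a) f) = ap d (kron (A x a) (E l)) f"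
    and PE: "ap d (PA x a) (ap d (EE l) f) = ap d (kron (A x a) (E l)) f"
    if "x < 2" "a < 2" "l \<in> \<Lambda>" for x a l f
  proof -
    have "EE l * PA x a = kron (A x a) (E l)" unfolding PA_def EE_def
      by (rule kron_mixed2[OF AC[OF that(1,2)] EC[OF that(3)]])
    then show "ap d (EE l) (ap d (PA x a) f) = ap d (kron (A x a) (E l)) f"
      using ap_mult[OF EEC[OF that(3)] PAC[OF that(1,2)], of f] by simp
    have "PA x a * EE l = kron (A x a) (E l)" unfolding PA_def EE_def
      by (rule kron_mixed1[OF AC[OF that(1,2)] EC[OF that(3)]])
    then show "ap d (PA x a) (ap d (EE l) f) = ap d (kron (A x a) (E l)) f"
      using ap_mult[OF PAC[OF that(1,2)] EEC[OF that(3)], of f] by simp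
  qed
  have commE: "ap d (EE l) (ap d (PA x a) f) = ap d (PA x a) (ap d (EE l) f)"
    if "l \<in> \<Lambda>" "x < 2" "a < 2" for l x a f
    using EP[OF that(2,3,1)] PE[OF that(2,3,1)] by simp
  define V where "V x l = (\<Sum>k<N. ip d (ap d (EE l) (C.Ao x (w k))) (w k))" for x l
  define Q where "Q l = (\<Sum>k<N. qf d (EE l) (w k))" for l
  have pLk: "complex_of_real (pQL \<eta> n a (Some b) x y) =
      (\<Sum>l\<in>\<Lambda>. complex_of_real (pb (Some b) y l) * (\<Sum>k<N. ip d (ap d (EE l) (ap d (PA x a) (w k))) (w k)))"
    if "a < 2" "b < 2" "x < 2" "y < n" for a b x y
  proof -
    have b: "Some b \<in> outL" using that(2) unfolding outL_def by auto
    show ?thesis unfolding pL[OF that(1) b that(3,4)]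
    proof (rule sum.cong[OF refl])
      fix l assume l: "l \<in> \<Lambda>"
      show "complex_of_real (pb (Some b) y l) * mtrace (\<rho> * kron (A x a) (E l)) =
        complex_of_real (pb (Some b) y l) * (\<Sum>k<N. ip d (ap d (EE l) (ap d (PA x a) (w k))) (w k))"
        unfolding tr[OF kronAE[OF that(3,1) l]] qf_def EP[OF that(3,1) l] ..
    qed
  qed
  have corrL_eq: "corrL (pQL \<eta> n) x y = (\<Sum>l\<in>\<Lambda>. (pb (Some 0) y l - pb (Some 1) y l) * Re (V x l))"
    if "x < 2" "y < n" for x y
  proof -
    have "complex_of_real (corrL (pQL \<eta> n) x y) = complex_of_real (pQL \<eta> n 0 (Some 0) x y) - complex_of_real (pQL \<eta> n 0 (Some 1) x y)
        - complex_of_real (pQL \<eta> n 1 (Some 0) x y) + complex_of_real (pQL \<eta> n 1 (Some 1) x y)"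
      unfolding corrL_def sum2 by simp
    also have "\<dots> = (\<Sum>l\<in>\<Lambda>. complex_of_real (pb (Some 0) y l - pb (Some 1) y l) * V x l)"
      unfolding pLk[OF L2(1) L2(1) that] pLk[OF L2(1) L2(2) that] pLk[OF L2(2) L2(1) that] pLk[OF L2(2) L2(2) that]
      unfolding V_def obs_def ap_diff ip_diffL sum_subtractf
      by (simp add: sum_subtractf[symmetric] sum.distrib[symmetric], rule sum.cong[OF refl], simp add: sum_subtractf algebra_simps)
    finally have "complex_of_real (corrL (pQL \<eta> n) x y) = (\<Sum>l\<in>\<Lambda>. complex_of_real (pb (Some 0) y l - pb (Some 1) y l) * V x l)" .
    then have "corrL (pQL \<eta> n) x y = Re (\<Sum>l\<in>\<Lambda>. complex_of_real (pb (Some 0) y l - pb (Some 1) y l) * V x l)"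
      by (metis Re_complex_of_real)
    then show ?thesis by (simp add: Re_sum)
  qed
  have Qreal: "Q l = complex_of_real (Re (Q l))" and Qnn: "0 \<le> Re (Q l)" if "l \<in> \<Lambda>" for l
  proof -
    have "Q l = (\<Sum>k<N. complex_of_real (Re (qf d (EE l) (w k))))"
      unfolding Q_def using psd_real[OF EEpsd[OF that]] by (intro sum.cong refl) blast
    then show "Q l = complex_of_real (Re (Q l))" by simp
    show "0 \<le> Re (Q l)" unfolding Q_def Re_sum using psd_nonneg[OF EEpsd[OF that]] by (intro sum_nonneg) blast
  qed
  have S01: "(\<Sum>k<N. ip d (ap d (EE l) (ap d (PA 0 0) (w k))) (w k)) + (\<Sum>k<N. ip d (ap d (EE l) (ap d (PA 0 1) (w k))) (w k)) = Q l"
    for l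
  proof -
    have "(\<Sum>k<N. ip d (ap d (EE l) (ap d (PA 0 0) (w k))) (w k)) + (\<Sum>k<N. ip d (ap d (EE l) (ap d (PA 0 1) (w k))) (w k))
      = (\<Sum>k<N. ip d (ap d (EE l) (\<lambda>i. 1 * ap d (PA 0 0) (w k) i + 1 * ap d (PA 0 1) (w k) i)) (w k))"
      unfolding ap_lin ip_linL sum.distrib by simp
    also have "\<dots> = Q l"
    proof -
      have "\<And>k. (\<lambda>i. 1 * ap d (PA 0 0) (w k) i + 1 * ap d (PA 0 1) (w k) i) = w k"
        using PAsum[OF _ zw] by simp
      then show ?thesis unfolding Q_def qf_def by simp
    qed
    finally show ?thesis .
  qed
  have T_eq: "(\<Sum>b<2. \<Sum>a<2. pQL \<eta> n a (Some b) 0 y) = (\<Sum>l\<in>\<Lambda>. (pb (Some 0) y l + pb (Some 1) y l) * Re (Q l))"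
    if "y < n" for y
  proof -
    have y0: "(0::nat) < 2" by simp
    have "complex_of_real (\<Sum>b<2. \<Sum>a<2. pQL \<eta> n a (Some b) 0 y) =
       complex_of_real (pQL \<eta> n 0 (Some 0) 0 y) + complex_of_real (pQL \<eta> n 1 (Some 0) 0 y)
       + complex_of_real (pQL \<eta> n 0 (Some 1) 0 y) + complex_of_real (pQL \<eta> n 1 (Some 1) 0 y)"
      unfolding sum2 by simp
    also have "\<dots> = (\<Sum>l\<in>\<Lambda>. complex_of_real (pb (Some 0) y l + pb (Some 1) y l) * Q l)"
      unfolding pLk[OF L2(1) L2(1) y0 that] pLk[OF L2(2) L2(1) y0 that] pLk[OF L2(1) L2(2) y0 that] pLk[OF L2(2) L2(2) y0 that]
      unfolding S01[symmetric]
      by (simp add: sum.distrib[symmetric], rule sum.cong[OF refl], simp add: sum.distrib algebra_simps)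
    also have "\<dots> = (\<Sum>l\<in>\<Lambda>. complex_of_real ((pb (Some 0) y l + pb (Some 1) y l) * Re (Q l)))"
      using Qreal by (intro sum.cong refl) (metis of_real_mult)
    finally have "complex_of_real (\<Sum>b<2. \<Sum>a<2. pQL \<eta> n a (Some b) 0 y) = complex_of_real (\<Sum>l\<in>\<Lambda>. (pb (Some 0) y l + pb (Some 1) y l) * Re (Q l))"
      by simp
    then show ?thesis using of_real_eq_iff by blast
  qed
  have Qsum: "(\<Sum>l\<in>\<Lambda>. Re (Q l)) = 1"
  proof -
    have Esum: "\<forall>i<d. \<forall>j<d. (\<Sum>l\<in>\<Lambda>. EE l $$ (i,j)) = (if i = j then 1 else 0)"
      unfolding EE_def d_def using kron_sum_right[OF finL _ povm_sum[OF Epov]] EC by blast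
    have "(\<Sum>l\<in>\<Lambda>. Q l) = (\<Sum>k<N. ip d (\<lambda>i. \<Sum>l\<in>\<Lambda>. ap d (EE l) (w k) i) (w k))"
      unfolding Q_def qf_def ip_sumL by (rule sum.swap)
    also have "\<dots> = (\<Sum>k<N. ip d (w k) (w k))"
      using ap_sum_id[OF finL Esum zw] by simp
    also have "\<dots> = complex_of_real (\<Sum>k<N. nrm d (w k))" unfolding ip_self by simp
    finally have "(\<Sum>l\<in>\<Lambda>. Q l) = 1" using nrm1 by simp
    then show ?thesis by (metis Re_sum one_complex.sel(1))
  qed
  have Vbound: "\<bar>\<alpha> * Re (V 0 l) + \<beta> * Re (V 1 l)\<bar> \<le> Re (Q l)"
    if l: "l \<in> \<Lambda>" and ab: "\<alpha>^2 + \<beta>^2 = 1" for l \<alpha> \<beta>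
  proof -
    have "\<alpha> * Re (V 0 l) + \<beta> * Re (V 1 l) = Re (complex_of_real \<alpha> * V 0 l + complex_of_real \<beta> * V 1 l)" by simp
    also have "complex_of_real \<alpha> * V 0 l + complex_of_real \<beta> * V 1 l =
      (\<Sum>k<N. complex_of_real \<alpha> * ip d (ap d (EE l) (C.Ao 0 (w k))) (w k) + complex_of_real \<beta> * ip d (ap d (EE l) (C.Ao 1 (w k))) (w k))"
      unfolding V_def by (simp add: sum.distrib sum_distrib_left)
    finally have e: "\<alpha> * Re (V 0 l) + \<beta> * Re (V 1 l) = Re (\<Sum>k<N. complex_of_real \<alpha> * ip d (ap d (EE l) (C.Ao 0 (w k))) (w k) + complex_of_real \<beta> * ip d (ap d (EE l) (C.Ao 1 (w k))) (w k))" .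
    have "\<bar>\<alpha> * Re (V 0 l) + \<beta> * Re (V 1 l)\<bar> \<le> cmod (\<Sum>k<N. complex_of_real \<alpha> * ip d (ap d (EE l) (C.Ao 0 (w k))) (w k) + complex_of_real \<beta> * ip d (ap d (EE l) (C.Ao 1 (w k))) (w k))"
      unfolding e by (rule abs_Re_le_cmod)
    also have "\<dots> \<le> (\<Sum>k<N. cmod (complex_of_real \<alpha> * ip d (ap d (EE l) (C.Ao 0 (w k))) (w k) + complex_of_real \<beta> * ip d (ap d (EE l) (C.Ao 1 (w k))) (w k)))"
      by (rule norm_sum)
    also have "\<dots> \<le> (\<Sum>k<N. Re (qf d (EE l) (w k)))"
    proof (rule sum_mono)
      fix k assume "k \<in> {..<N}"
      then have k: "k < N" by simp
      show "cmod (complex_of_real \<alpha> * ip d (ap d (EE l) (C.Ao 0 (w k))) (w k) + complex_of_real \<beta> * ip d (ap d (EE l) (C.Ao 1 (w k))) (w k)) \<le> Re (qf d (EE l) (w k))"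
        by (rule C.E_bound[OF zw rigid[OF k] EEpsd[OF l] commE[OF l] ab])
    qed
    also have "\<dots> = Re (Q l)" unfolding Q_def Re_sum ..
    finally show ?thesis .
  qed
  define t where "t y l = pb (Some 0) y l + pb (Some 1) y l" for y l
  define c where "c y l = pb (Some 0) y l - pb (Some 1) y l" for y l
  have pb3: "0 \<le> pb (Some 0) y l \<and> 0 \<le> pb (Some 1) y l \<and> 0 \<le> pb None y l \<and> pb (Some 0) y l + pb (Some 1) y l + pb None y l = 1"
    if "y < n" "l \<in> \<Lambda>" for y l
    using pbp[OF that] unfolding outL_def by (simp add: add.assoc)
  have tb: "0 \<le> t y l \<and> t y l \<le> 1" if "y < n" "l \<in> \<Lambda>" for y l
    using pb3[OF that] unfolding t_def by linarith
  have cb: "\<bar>c y l\<bar> \<le> t y l" if "y < n" "l \<in> \<Lambda>" for y l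
    using pb3[OF that] unfolding t_def c_def by linarith
  have n0: "real n > 0" using n by simp
  have Wsum: "(\<Sum>y<n. \<Sum>l\<in>\<Lambda>. c y l * (cos (theta n y) * Re (V 0 l) + sin (theta n y) * Re (V 1 l))) = real n * \<eta>"
  proof -
    have "(\<Sum>y<n. \<Sum>l\<in>\<Lambda>. c y l * (cos (theta n y) * Re (V 0 l) + sin (theta n y) * Re (V 1 l)))
      = (\<Sum>y<n. cos (theta n y) * corrL (pQL \<eta> n) 0 y + sin (theta n y) * corrL (pQL \<eta> n) 1 y)"
    proof (rule sum.cong[OF refl])
      fix y assume "y \<in> {..<n}"
      then have y: "y < n" by simp
      show "(\<Sum>l\<in>\<Lambda>. c y l * (cos (theta n y) * Re (V 0 l) + sin (theta n y) * Re (V 1 l))) =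
        cos (theta n y) * corrL (pQL \<eta> n) 0 y + sin (theta n y) * corrL (pQL \<eta> n) 1 y"
        unfolding corrL_eq[OF L2(1) y] corrL_eq[OF L2(2) y] c_def sum_distrib_left sum.distrib[symmetric]
        by (rule sum.cong[OF refl]) (simp add: algebra_simps)
    qed
    also have "\<dots> = real n * \<eta>" using part3[OF n, of \<eta>] n0 unfolding Wn_def by (simp add: field_simps)
    finally show ?thesis .
  qed
  have Tsum: "(\<Sum>y<n. \<Sum>l\<in>\<Lambda>. t y l * Re (Q l)) = real n * \<eta>"
  proof -
    have "(\<Sum>y<n. \<Sum>l\<in>\<Lambda>. t y l * Re (Q l)) = (\<Sum>y<n. \<Sum>b<2. \<Sum>a<2. pQL \<eta> n a (Some b) 0 y)"
      unfolding t_def using T_eq by simp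
    also have "\<dots> = real n * \<eta>" using part2[OF n, of \<eta>] n0 unfolding Tn_def by (simp add: field_simps)
    finally show ?thesis .
  qed
  have "(\<Sum>y<n. \<Sum>l\<in>\<Lambda>. t y l * Re (Q l)) \<le> 1"
  proof (rule final_real[OF finL])
    show "(\<Sum>y<n. \<Sum>l\<in>\<Lambda>. c y l * (cos (theta n y) * Re (V 0 l) + sin (theta n y) * Re (V 1 l))) = (\<Sum>y<n. \<Sum>l\<in>\<Lambda>. t y l * Re (Q l))"
      by (rule trans[OF Wsum Tsum[symmetric]])
  next
    show "\<And>y l. y < n \<Longrightarrow> l \<in> \<Lambda> \<Longrightarrow> 0 \<le> t y l \<and> t y l \<le> 1" by (rule tb)
    show "\<And>y l. y < n \<Longrightarrow> l \<in> \<Lambda> \<Longrightarrow> \<bar>c y l\<bar> \<le> t y l" by (rule cb)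
    show "\<And>l. l \<in> \<Lambda> \<Longrightarrow> 0 \<le> Re (Q l)" by (rule Qnn)
    show "(\<Sum>l\<in>\<Lambda>. Re (Q l)) = 1" by (rule Qsum)
    show "\<And>l \<alpha> \<beta>. l \<in> \<Lambda> \<Longrightarrow> \<alpha>^2 + \<beta>^2 = 1 \<Longrightarrow> \<bar>\<alpha> * Re (V 0 l) + \<beta> * Re (V 1 l)\<bar> \<le> Re (Q l)"
      by (rule Vbound)
  qed
  then have "real n * \<eta> \<le> 1" using Tsum by simp
  moreover have "real n * \<eta> > 1" using eta n0 by (simp add: field_simps)
  ultimately show False by simp

qed

theorem mainTheorem13:
  fixes n :: nat and \<eta> :: real
  assumes "n \<ge> 1" and "0 < \<eta>" and "\<eta> \<le> 1"
  shows "CHSH pQS = 2 * sqrt 2 \<and> Tn n (pQL \<eta> n) = \<eta> \<and> Wn n (pQL \<eta> n) = \<eta> \<and>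
         (\<eta> > 1 / real n \<longrightarrow> \<not> SRQ n pQS (pQL \<eta> n))"
proof (intro conjI impI notI)
  show "CHSH pQS = 2 * sqrt 2" by (rule part1)
  show "Tn n (pQL \<eta> n) = \<eta>" by (rule part2[OF assms(1)])
  show "Wn n (pQL \<eta> n) = \<eta>" by (rule part3[OF assms(1)])
  fix h assume "\<eta> > 1 / real n" "SRQ n pQS (pQL \<eta> n)"
  then show False using part4[OF assms(1)] by blast
qed

end
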